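(* Let $X$ be a Fr\'echet space with translation-invariant metric $d$, let $\mathfrak F\subseteq\mathfrak S$, and let $X_1\subseteq X_2\subseteq\cdots$ be an increasing sequence of linear subspaces of $X$ such that $(\rho,X_n)\in\operatorname{Sat}_u(\mathfrak F)$ for every $n$ and $\bigcup_nX_n$ is dense in $X$. Then $\mathbb D(\mathfrak F)$ is approximately controllable on $X$ (i.e. $\overline{A_{\mathbb D(\mathfrak F)}(u,t)}=X$ for all $u\in X$, $t>0$), and for every continuous linear projection $\pi:X\to X$ onto a finite-dimensional subspace, for all $u,v\in X$ and $t,\varepsilon>0$ there exist $\Psi^1,\dots,\Psi^n\in\mathbb D(\mathfrak F)$ and $t_1,\dots,t_n>0$ with $\sum t_i=t$, $\pi(\Psi^n_{t_n}\cdots\Psi^1_{t_1}u)=\pi(v)$ and $d(\Psi^n_{t_n}\cdots\Psi^1_{t_1}u,v)<\varepsilon$.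
   Context: $\dagger\notin X$ is an extra point and $(Y,d_Y)$ an auxiliary metric space (here one may take $Y=X$). For nonempty $Z\subseteq Y$, a one-parameter family of continuous local semigroups on $X$ parametrized by $Z$ is a map $(t,u,p)\mapsto\Phi^p_tu:[0,\infty)\times X\times Z\to X\cup\{\dagger\}$ such that for every $u,p$ there is $T_{u,p}>0$ with: (i) $\Phi^p_tu\in X$ for $t<T_{u,p}$ and $=\dagger$ otherwise; (ii) $\Phi^p_0u=u$ and $\Phi^p_{t+s}u=\Phi^p_t\Phi^p_su$ (with $t<T_{\Phi^p_su,p}$) whenever $s+t<T_{u,p}$; (iii) joint continuity: for $t<T_{u,p}$, $\varepsilon>0$ there is $\delta>0$ with $|t-t'|+d(u,u')+d_Y(p,p')<\delta\Rightarrow t'<T_{u',p'}$ and $d(\Phi^p_tu,\Phi^{p'}_{t'}u')<\varepsilon$. $\mathfrak S$ is the set of all such, $\mathcal P(\Phi)$ the parameter set, $\mathbb D(\mathfrak F)=\{\Phi^p:\Phi\in\mathfrak F,p\in\mathcal P(\Phi)\}$. Compositions only considered when defined in $X$. $A_{\mathcal F}(u,t)=\{\Phi^n_{t_n}\cdots\Phi^1_{t_1}u:\Phi^j\in\mathcal F,t_j>0,\sum t_j=t\}$. For a linear subspace $Y'\subseteq X$, $(\rho,Y')$ is the ray semigroup family $\rho^p_tu=u+tp$, $p\in Y'$. Uniform subsumption $\mathfrak F\preccurlyeq_u\mathfrak G$: for every $\Psi\in\mathfrak F$, $t,\varepsilon>0$, compact $K_1\subseteq X$, $K_2\subseteq\mathcal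 P(\Psi)$, there exist $\Phi^1,\dots,\Phi^n\in\mathfrak G$, $t_k>0$ with $\sum t_k\le t$ and continuous $f_k:K_2\to\mathcal P(\Phi^k)$ with $\sup_{u\in K_1,p\in K_2}d(\Psi^p_tu,\Phi^{n,f_n(p)}_{t_n}\cdots\Phi^{1,f_1(p)}_{t_1}u)<\varepsilon$. $\operatorname{Sat}_u(\mathfrak F)=\bigcup_{\mathfrak G\preccurlyeq_u\mathfrak F}\mathfrak G$. *)

theory Defs
  imports "HOL-Analysis.Analysis"
begin

text \<open>Frechet space: a complete metric real vector space whose metric is
translation invariant, with jointly continuous scalar multiplication, and
locally convex (addition is continuous by translation invariance).\<close>

definition frechet_space :: "'a::{real_vector, complete_space} itself \<Rightarrow> bool" where
  "frechet_space (_ :: 'a itself) \<longleftrightarrow>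
     (\<forall>x y z :: 'a. dist (x + z) (y + z) = dist x y) \<and>
     continuous_on UNIV (\<lambda>q::real \<times> 'a. fst q *\<^sub>R snd q) \<and>
     (\<forall>U :: 'a set. open U \<and> 0 \<in> U \<longrightarrow> (\<exists>V. open V \<and> convex V \<and> 0 \<in> V \<and> V \<subseteq> U))"

text \<open>A one-parameter family of local semigroups parametrized by Z (a subset of
the auxiliary space Y = X) is a pair (Phi, Z); Phi t u p = None encodes the extra
point dagger.\<close>

type_synonym 'a family = "(real \<Rightarrow> 'a \<Rightarrow> 'a \<Rightarrow> 'a option) \<times> 'a set"
type_synonym 'a semigroup = "real \<Rightarrow> 'a \<Rightarrow> 'a option"

definition is_family :: "'a::metric_space family \<Rightarrow> bool" where
  "is_family F \<longleftrightarrow> (case F of (\<Phi>, Z) \<Rightarrow>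
     Z \<noteq> {} \<and>
     (\<forall>t u p. (t < 0 \<or> p \<notin> Z) \<longrightarrow> \<Phi> t u p = None) \<and>
     \<comment> \<open>(i) maximal existence time T in (0, infinity]\<close>
     (\<forall>u. \<forall>p\<in>Z. \<exists>T::ereal. T > 0 \<and> (\<forall>t\<ge>0. \<Phi> t u p \<noteq> None \<longleftrightarrow> ereal t < T)) \<and>
     \<comment> \<open>(ii) semigroup property\<close>
     (\<forall>u. \<forall>p\<in>Z. \<Phi> 0 u p = Some u) \<and>
     (\<forall>u. \<forall>p\<in>Z. \<forall>s\<ge>0. \<forall>t\<ge>0. \<Phi> (s + t) u p \<noteq> None \<longrightarrow>
        (\<exists>w. \<Phi> s u p = Some w \<and> \<Phi> t w p = \<Phi> (s + t) u p)) \<and>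
     \<comment> \<open>(iii) joint continuity\<close>
     (\<forall>t u. \<forall>p\<in>Z. \<forall>x. t \<ge> 0 \<and> \<Phi> t u p = Some x \<longrightarrow>
        (\<forall>\<epsilon>>0. \<exists>\<delta>>0. \<forall>t'\<ge>0. \<forall>u'. \<forall>p'\<in>Z.
           \<bar>t - t'\<bar> + dist u u' + dist p p' < \<delta> \<longrightarrow>
           (\<exists>x'. \<Phi> t' u' p' = Some x' \<and> dist x x' < \<epsilon>))))"

definition SG :: "'a::metric_space family set" where
  "SG = {F. is_family F}"

definition params :: "'a family \<Rightarrow> 'a set" where
  "params F = snd F"

definition DD :: "'a family set \<Rightarrow> 'a semigroup set" where
  "DD \<FF> = {(\<lambda>t u. \<Phi> t u p) | \<Phi> Z p. (\<Phi>, Z) \<in> \<FF> \<and> p \<in> Z}"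

fun apply_seq :: "('a semigroup \<times> real) list \<Rightarrow> 'a \<Rightarrow> 'a option" where
  "apply_seq [] u = Some u"
| "apply_seq ((\<Psi>, t) # rest) u =
     (case \<Psi> t u of None \<Rightarrow> None | Some w \<Rightarrow> apply_seq rest w)"

definition attainable :: "'a semigroup set \<Rightarrow> 'a \<Rightarrow> real \<Rightarrow> 'a set" where
  "attainable \<D> u t = {v. \<exists>L. L \<noteq> [] \<and> (\<forall>(\<Psi>, s)\<in>set L. \<Psi> \<in> \<D> \<and> s > 0) \<and>
       sum_list (map snd L) = t \<and> apply_seq L u = Some v}"

definition approx_controllable :: "'a::topological_space semigroup set \<Rightarrow> bool" where
  "approx_controllable \<D> \<longleftrightarrow> (\<forall>u. \<forall>t>0. closure (attainable \<D> u t) = UNIV)"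

definition ray :: "'a::real_vector set \<Rightarrow> 'a family" where
  "ray Y' = ((\<lambda>t u p. if t \<ge> 0 \<and> p \<in> Y' then Some (u + t *\<^sub>R p) else None), Y')"

text \<open>Uniform subsumption F \<preccurlyeq>_u G. A list entry ((Phi,Z), t_k, f_k)
stands for Phi^k with time t_k and parameter map f_k : K2 \<rightarrow> Z.\<close>
definition usub :: "'a::metric_space family set \<Rightarrow> 'a family set \<Rightarrow> bool" where
  "usub \<FF> \<GG> \<longleftrightarrow>
    (\<forall>(\<Psi>, Z\<Psi>)\<in>\<FF>. \<forall>t>0. \<forall>\<epsilon>>0. \<forall>K1 K2. compact K1 \<and> compact K2 \<and> K2 \<subseteq> Z\<Psi> \<longrightarrow>
      (\<exists>L :: ('a family \<times> real \<times> ('a \<Rightarrow> 'a)) list.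
         L \<noteq> [] \<and>
         (\<forall>((\<Phi>, Z), s, f)\<in>set L. (\<Phi>, Z) \<in> \<GG> \<and> s > 0 \<and>
              continuous_on K2 f \<and> f ` K2 \<subseteq> Z) \<and>
         sum_list (map (\<lambda>(_, s, _). s) L) \<le> t \<and>
         (\<exists>c<\<epsilon>. \<forall>u\<in>K1. \<forall>p\<in>K2. \<exists>x w.
            \<Psi> t u p = Some x \<and>
            apply_seq (map (\<lambda>((\<Phi>, Z), s, f). ((\<lambda>r v. \<Phi> r v (f p)), s)) L) u = Some w \<and>
            dist x w \<le> c)))"

definition Sat_u :: "'a::metric_space family set \<Rightarrow> 'a family set" where
  "Sat_u \<FF> = \<Union>{\<GG>. \<GG> \<subseteq> SG \<and> usub \<GG> \<FF>}"

end

theory Submission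
  imports Defs "HOL-Homology.Homology"
begin


lemma L2_scale: "L2_set (\<lambda>i. c * f i) A = \<bar>c\<bar> * L2_set f A"
proof -
  have "L2_set (\<lambda>i. c * f i) A = L2_set (\<lambda>i. \<bar>c\<bar> * f i) A"
    unfolding L2_set_def by (simp add: power_mult_distrib)
  also have "\<dots> = \<bar>c\<bar> * L2_set f A" by (simp add: L2_set_right_distrib)
  finally show ?thesis .
qed

lemma L2_diff: "L2_set (\<lambda>i. f i - g i) A \<le> L2_set f A + L2_set g A"
proof -
  have "L2_set (\<lambda>i. f i + (-1) * g i) A \<le> L2_set f A + L2_set (\<lambda>i. (-1) * g i) A"
    by (rule L2_set_triangle_ineq)
  moreover have "L2_set (\<lambda>i. - g i) A = L2_set g A" using L2_scale[of "-1" g A] by simp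
  ultimately show ?thesis by simp
qed

lemma L2_sq: "finite A \<Longrightarrow> (L2_set f A)\<^sup>2 = (\<Sum>i\<in>A. (f i)\<^sup>2)"
  unfolding L2_set_def by (simp add: sum_nonneg)

lemma homeq: "homotopic_with_canon (\<lambda>x. True) S T f g"
    if "continuous_on ({0..1::real}\<times>S) h" "h \<in> ({0..1}\<times>S) \<rightarrow> T"
       "\<And>x. x \<in> S \<Longrightarrow> h (0,x) = f x" "\<And>x. x \<in> S \<Longrightarrow> h (1,x) = g x" for h f g
    apply (subst homotopic_with)
     apply simp
    apply (rule exI[where x=h])
    using that by (simp add: Pi_iff image_subset_iff)

lemma hit_zero:
  fixes \<Gamma> :: "(nat \<Rightarrow> real) \<Rightarrow> (nat \<Rightarrow> real)"
  assumes m: "m > 0" and r: "r > 0"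
    and D: "D = {x. (\<forall>i\<ge>m. x i = 0) \<and> L2_set x {..<m} \<le> r}"
    and cont: "continuous_on D \<Gamma>"
    and supp: "\<And>x i. x \<in> D \<Longrightarrow> i \<ge> m \<Longrightarrow> \<Gamma> x i = 0"
    and close: "\<And>x. x \<in> D \<Longrightarrow> L2_set (\<lambda>i. \<Gamma> x i - x i) {..<m} < r"
  shows "\<exists>x\<in>D. \<Gamma> x = (\<lambda>i. 0)"
proof (rule ccontr)
  assume nz0: "\<not> (\<exists>x\<in>D. \<Gamma> x = (\<lambda>i. 0))"
  define n where "n = m - 1"
  have nm: "{..n} = {..<m}" using m by (auto simp: n_def)
  define S where "S = {x::nat\<Rightarrow>real. (\<Sum>i\<le>n. x i ^ 2) = 1 \<and> (\<forall>i>n. x i = 0)}"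
  define N where "N z = L2_set z {..<m}" for z :: "nat \<Rightarrow> real"
  define nz where "nz z = (\<lambda>i. z i / N z)" for z :: "nat \<Rightarrow> real"
  have Npos: "N (\<Gamma> x) > 0" if "x \<in> D" for x
  proof -
    have "N (\<Gamma> x) \<noteq> 0"
    proof
      assume "N (\<Gamma> x) = 0"
      then have "\<forall>i\<in>{..<m}. \<Gamma> x i = 0" unfolding N_def by (simp add: L2_set_eq_0_iff)
      with supp[OF that] have "\<Gamma> x = (\<lambda>i. 0)" by (metis lessThan_iff not_le_imp_less)
      with nz0 that show False by blast
    qed
    moreover have "N (\<Gamma> x) \<ge> 0" unfolding N_def by (simp add: L2_set_nonneg)
    ultimately show ?thesis by linarith
  qed
  have nzS: "nz z \<in> S" if "N z > 0" "\<And>i. i \<ge> m \<Longrightarrow> z i = 0" for z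
  proof -
    have "(\<Sum>i\<le>n. nz z i ^ 2) = (\<Sum>i<m. (z i)^2) / (N z)^2"
      unfolding nz_def nm by (simp add: power_divide sum_divide_distrib)
    also have "\<dots> = 1"
    proof -
      have "(N z)^2 = (\<Sum>i<m. (z i)^2)" unfolding N_def by (simp add: L2_sq)
      moreover have "(N z)^2 > 0" using that(1) by simp
      ultimately show ?thesis by simp
    qed
    finally show ?thesis unfolding S_def nz_def using that(2) n_def m by auto
  qed
  have NS: "N x = 1" if "x \<in> S" for x
  proof -
    have "(N x)^2 = 1" using that unfolding S_def N_def by (simp add: L2_sq nm)
    moreover have "N x \<ge> 0" unfolding N_def by (simp add: L2_set_nonneg)
    ultimately show ?thesis by (simp add: power2_eq_1_iff)
  qed
  have Ssupp: "x i = 0" if "x \<in> S" "i \<ge> m" for x i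
    using that m unfolding S_def n_def by auto
  define rs where "rs x = (\<lambda>i. r * x i)" for x :: "nat \<Rightarrow> real"
  have rsD: "(\<lambda>i. c * r * x i) \<in> D" if "x \<in> S" "0 \<le> c" "c \<le> 1" for x c
  proof -
    have "L2_set (\<lambda>i. (c * r) * x i) {..<m} = c * r"
      using NS[OF that(1)] that r unfolding N_def by (simp add: L2_scale)
    then show ?thesis using that r Ssupp unfolding D
      by (auto simp: mult_left_le_one_le)
  qed
  define z1 where "z1 = (\<lambda>p::real\<times>(nat\<Rightarrow>real). (\<lambda>i. (1 - fst p) * snd p i + fst p * \<Gamma> (\<lambda>j. 1 * r * snd p j) i))"
  have z1N: "N (z1 (t,x)) > 0" if "t \<in> {0..1}" "x \<in> S" for t x
  proof -
    define e where "e = (\<lambda>i. \<Gamma> (\<lambda>j. 1 * r * x j) i - r * x i)"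
    have eN: "N e < r" unfolding e_def N_def using close[OF rsD[OF that(2), of 1]] by simp
    have z: "z1 (t,x) = (\<lambda>i. (1 - t + t * r) * x i + t * e i)"
      unfolding z1_def e_def by (auto simp: algebra_simps)
    have "(1 - t + t * r) * N x = N (\<lambda>i. (1 - t + t * r) * x i)"
      unfolding N_def using that r by (simp add: L2_scale mult_nonneg_nonneg)
    also have "\<dots> = N (\<lambda>i. z1 (t,x) i - t * e i)" by (simp add: z)
    also have "\<dots> \<le> N (z1 (t,x)) + N (\<lambda>i. t * e i)" unfolding N_def by (rule L2_diff)
    also have "N (\<lambda>i. t * e i) = t * N e" unfolding N_def using that by (simp add: L2_scale)
    finally have fin: "1 - t + t * r - t * N e \<le> N (z1 (t, x))" using NS[OF that(2)] by simp
    show ?thesis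
    proof (cases "t = 0")
      case True
      then show ?thesis using fin by simp
    next
      case False
      then have "t > 0" using that by simp
      then have "t * N e < t * r" using eN by simp
      then show ?thesis using fin that by simp
    qed
  qed
  have contnz: "continuous_on ({0..1}\<times>S) (\<lambda>p. nz (z p))"
    if "continuous_on ({0..1}\<times>S) z" "\<And>p. p \<in> {0..1}\<times>S \<Longrightarrow> N (z p) > 0" for z
  proof -
    have ci: "continuous_on ({0..1}\<times>S) (\<lambda>p. z p i)" for i
      using that(1) by (rule continuous_on_product_then_coordinatewise)
    have cN: "continuous_on ({0..1}\<times>S) (\<lambda>p. N (z p))"
      unfolding N_def L2_set_def by (intro continuous_intros ci)
    show ?thesis unfolding nz_def
      apply (rule continuous_on_coordinatewise_then_product)
      apply (rule continuous_on_divide[OF ci cN])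
      using that(2) by fastforce
  qed
  have csnd: "continuous_on A (\<lambda>p::real\<times>(nat\<Rightarrow>real). snd p j)" for A j
    by (rule continuous_on_product_then_coordinatewise[OF continuous_on_snd[OF continuous_on_id]])
  have rsD1: "(\<lambda>j. 1 * r * x j) \<in> D" if "x \<in> S" for x using rsD[OF that, of 1] by simp
  have cz1: "continuous_on ({0..1}\<times>S) z1"
  proof -
    have c1: "continuous_on ({0..1}\<times>S) (\<lambda>p::real\<times>(nat\<Rightarrow>real). (\<lambda>j. 1 * r * snd p j))"
      by (rule continuous_on_coordinatewise_then_product, intro continuous_on_mult continuous_on_const csnd)
    have c2: "continuous_on ({0..1}\<times>S) (\<lambda>p::real\<times>(nat\<Rightarrow>real). \<Gamma> (\<lambda>j. 1 * r * snd p j))"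
      by (rule continuous_on_compose2[OF cont c1]) (use rsD1 in auto)
    show ?thesis unfolding z1_def
      by (rule continuous_on_coordinatewise_then_product, intro continuous_on_add continuous_on_mult 
           continuous_on_diff continuous_on_const continuous_on_fst continuous_on_id
           continuous_on_product_then_coordinatewise[OF c2] csnd)
  qed
  have z1supp: "z1 p i = 0" if "p \<in> {0..1}\<times>S" "i \<ge> m" for p i
  proof -
    have "snd p \<in> S" using that by auto
    then have "snd p i = 0" "\<Gamma> (\<lambda>j. 1 * r * snd p j) i = 0"
      using Ssupp supp[OF rsD1] that(2) by auto
    then show ?thesis unfolding z1_def by simp
  qed
  have z1N': "N (z1 p) > 0" if "p \<in> {0..1}\<times>S" for p
    using z1N[of "fst p" "snd p"] that by (auto simp: mem_Times_iff)
  have hom1: "homotopic_with_canon (\<lambda>x. True) S S id (\<lambda>x. nz (z1 (1,x)))"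
  proof (rule homeq[where h="\<lambda>p. nz (z1 p)"])
    show "continuous_on ({0..1}\<times>S) (\<lambda>p. nz (z1 p))"
      by (rule contnz[OF cz1 z1N'])
    show "(\<lambda>p. nz (z1 p)) \<in> {0..1} \<times> S \<rightarrow> S"
      by (intro Pi_I nzS z1N' z1supp)
    show "nz (z1 (0, x)) = id x" if "x \<in> S" for x
      using NS[OF that] unfolding nz_def z1_def by simp
  qed simp
  define z2 where "z2 = (\<lambda>p::real\<times>(nat\<Rightarrow>real). \<Gamma> (\<lambda>j. (1 - fst p) * r * snd p j))"
  have rsD2: "(\<lambda>j. (1 - fst p) * r * snd p j) \<in> D" if "p \<in> {0..1}\<times>S" for p
    using rsD[of "snd p" "1 - fst p"] that by auto
  have cz2: "continuous_on ({0..1}\<times>S) z2"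
  proof -
    have c1: "continuous_on ({0..1}\<times>S) (\<lambda>p::real\<times>(nat\<Rightarrow>real). (\<lambda>j. (1 - fst p) * r * snd p j))"
      by (rule continuous_on_coordinatewise_then_product, intro continuous_on_mult continuous_on_diff 
           continuous_on_const continuous_on_fst continuous_on_id csnd)
    show ?thesis unfolding z2_def
      by (rule continuous_on_compose2[OF cont c1]) (use rsD2 in auto)
  qed
  have hom2: "homotopic_with_canon (\<lambda>x. True) S S (\<lambda>x. nz (z1 (1,x))) (\<lambda>x. nz (\<Gamma> (\<lambda>j. 0)))"
  proof (rule homeq[where h="\<lambda>p. nz (z2 p)"])
    show "continuous_on ({0..1}\<times>S) (\<lambda>p. nz (z2 p))"
      by (rule contnz[OF cz2]) (unfold z2_def, rule Npos[OF rsD2])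
    show "(\<lambda>p. nz (z2 p)) \<in> {0..1} \<times> S \<rightarrow> S"
      unfolding z2_def by (intro Pi_I nzS Npos[OF rsD2] supp[OF rsD2])
    show "nz (z2 (0, x)) = nz (z1 (1,x))" if "x \<in> S" for x
      unfolding z1_def z2_def by simp
    show "nz (z2 (1, x)) = nz (\<Gamma> (\<lambda>j. 0))" if "x \<in> S" for x
      unfolding z2_def by simp
  qed
  have "contractible S"
    unfolding contractible_def using homotopic_with_trans[OF hom1 hom2] by blast
  moreover have "nsphere n = top_of_set S"
    unfolding nsphere S_def euclidean_product_topology by simp
  ultimately show False using non_contractible_space_nsphere[of n] by simp
qed


lemma fr_ti: "frechet_space TYPE('a::{real_vector,complete_space}) \<Longrightarrow> dist (x + z) (y + z) = dist x (y::'a)"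
  unfolding frechet_space_def by blast

lemma fr_sc: "frechet_space TYPE('a::{real_vector,complete_space}) \<Longrightarrow>
   continuous_on UNIV (\<lambda>q::real \<times> 'a. fst q *\<^sub>R snd q)"
  unfolding frechet_space_def by blast

lemma fr_lc: "frechet_space TYPE('a::{real_vector,complete_space}) \<Longrightarrow> open U \<Longrightarrow> (0::'a) \<in> U \<Longrightarrow>
   \<exists>V. open V \<and> convex V \<and> 0 \<in> V \<and> V \<subseteq> U"
  unfolding frechet_space_def by blast

context
  fixes dummy :: "'a::{real_vector,complete_space}"
  assumes FR: "frechet_space TYPE('a)"
begin

lemma d0: "dist x y = dist (x - y) (0::'a)"
  using fr_ti[OF FR, of "x - y" y 0] by simp

lemma dadd: "dist (a + b) (c + d) \<le> dist a c + dist b (d::'a)"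
proof -
  have "dist (a + b) (c + d) \<le> dist (a + b) (c + b) + dist (c + b) (c + d)" by (rule dist_triangle)
  moreover have "dist (a + b) (c + b) = dist a c" by (rule fr_ti[OF FR])
  moreover have "dist (c + b) (c + d) = dist b d" using fr_ti[OF FR, of b c d] by (simp add: add.commute)
  ultimately show ?thesis by simp
qed

lemma dminus: "dist (-a) (-b) = dist a (b::'a)"
  using fr_ti[OF FR, of "-a" "a + b" "-b"] by (simp add: dist_commute)

lemma ddiff: "dist (a - b) (c - d) \<le> dist a c + dist b (d::'a)"
  using dadd[of a "-b" c "-d"] dminus[of b d] by simp

lemma cont_add:
  fixes S :: "'b::metric_space set"
  assumes "continuous_on S f" "continuous_on S g"
  shows "continuous_on S (\<lambda>x. f x + g x :: 'a)"
  unfolding continuous_on_iff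
proof (intro ballI allI impI)
  fix x and e :: real assume x: "x \<in> S" and e: "e > 0"
  obtain d1 where d1: "d1 > 0" "\<forall>x'\<in>S. dist x' x < d1 \<longrightarrow> dist (f x') (f x) < e/2"
    using assms(1) x e unfolding continuous_on_iff by (meson half_gt_zero)
  obtain d2 where d2: "d2 > 0" "\<forall>x'\<in>S. dist x' x < d2 \<longrightarrow> dist (g x') (g x) < e/2"
    using assms(2) x e unfolding continuous_on_iff by (meson half_gt_zero)
  show "\<exists>d>0. \<forall>x'\<in>S. dist x' x < d \<longrightarrow> dist (f x' + g x') (f x + g x) < e"
  proof (intro exI[of _ "min d1 d2"] conjI ballI impI)
    fix x' assume "x' \<in> S" "dist x' x < min d1 d2"
    then have "dist (f x') (f x) < e/2" "dist (g x') (g x) < e/2" using d1 d2 by auto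
    then show "dist (f x' + g x') (f x + g x) < e" using dadd[of "f x'" "g x'" "f x" "g x"] by simp
  qed (use d1 d2 in auto)
qed

lemma cont_neg:
  fixes S :: "'b::metric_space set"
  assumes "continuous_on S f"
  shows "continuous_on S (\<lambda>x. - f x :: 'a)"
  using assms unfolding continuous_on_iff by (simp add: dminus)

lemma cont_diff:
  fixes S :: "'b::metric_space set"
  assumes "continuous_on S f" "continuous_on S g"
  shows "continuous_on S (\<lambda>x. f x - g x :: 'a)"
  using cont_add[OF assms(1) cont_neg[OF assms(2)]] by simp

lemma cont_scale:
  assumes "continuous_on S c" "continuous_on S f"
  shows "continuous_on S (\<lambda>x. c x *\<^sub>R f x :: 'a)"
proof -
  have "continuous_on S ((\<lambda>q::real \<times> 'a. fst q *\<^sub>R snd q) \<circ> (\<lambda>x. (c x, f x)))"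
    by (rule continuous_on_compose[OF continuous_on_Pair[OF assms]])
       (rule continuous_on_subset[OF fr_sc[OF FR]], simp)
  then show ?thesis by (simp add: o_def)
qed

lemma cont_sum:
  fixes S :: "'b::metric_space set"
  assumes "finite I" "\<And>i. i \<in> I \<Longrightarrow> continuous_on S (f i)"
  shows "continuous_on S (\<lambda>x. \<Sum>i\<in>I. f i x :: 'a)"
  using assms
proof (induction I rule: finite_induct)
  case empty
  then show ?case by (simp add: continuous_on_const)
next
  case (insert a I)
  then show ?case by (simp, intro cont_add) auto
qed

lemma dsum: "finite I \<Longrightarrow> dist (\<Sum>i\<in>I. f i) (0::'a) \<le> (\<Sum>i\<in>I. dist (f i) 0)"
proof (induction I rule: finite_induct)
  case (insert a I)
  then show ?case using dadd[of "f a" "sum f I" 0 0] by simp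
qed simp

lemma lin_uc:
  assumes "linear \<pi>" "continuous_on UNIV (\<pi> :: 'a \<Rightarrow> 'a)" "e > 0"
  shows "\<exists>d>0. \<forall>x y::'a. dist x y < d \<longrightarrow> dist (\<pi> x) (\<pi> y) < e"
proof -
  obtain d where d: "d > 0" "\<forall>x'::'a. dist x' 0 < d \<longrightarrow> dist (\<pi> x') (\<pi> 0) < e"
    using assms(2,3) unfolding continuous_on_iff by blast
  have p0: "\<pi> 0 = 0" using assms(1) by (simp add: linear_0)
  show ?thesis
  proof (intro exI[of _ d] conjI allI impI)
    fix x y :: 'a assume "dist x y < d"
    then have "dist (x - y) 0 < d" by (simp add: d0[symmetric])
    then have "dist (\<pi> (x - y)) 0 < e" using d p0 by auto
    then show "dist (\<pi> x) (\<pi> y) < e" using assms(1) by (simp add: linear_diff d0[of "\<pi> x"])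
  qed (use d in auto)
qed

end


definition valid :: "'a family set \<Rightarrow> ('a semigroup \<times> real) list \<Rightarrow> bool" where
  "valid F L \<longleftrightarrow> (\<forall>(\<Psi>, s)\<in>set L. \<Psi> \<in> DD F \<and> s > 0)"

definition mkL :: "('a family \<times> real \<times> ('a \<Rightarrow> 'a)) list \<Rightarrow> 'a \<Rightarrow> ('a semigroup \<times> real) list" where
  "mkL L p = map (\<lambda>((\<Phi>, Z), s, f). ((\<lambda>r v. \<Phi> r v (f p)), s)) L"

lemma valid_append[simp]: "valid F (L1 @ L2) \<longleftrightarrow> valid F L1 \<and> valid F L2"
  unfolding valid_def by auto

lemma valid_Cons[simp]: "valid F ((\<Psi>, s) # L) \<longleftrightarrow> \<Psi> \<in> DD F \<and> s > 0 \<and> valid F L"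
  unfolding valid_def by auto

lemma apply_seq_append:
  "apply_seq (L1 @ L2) u = (case apply_seq L1 u of None \<Rightarrow> None | Some w \<Rightarrow> apply_seq L2 w)"
proof (induction L1 arbitrary: u)
  case Nil
  then show ?case by simp
next
  case (Cons a L1)
  obtain \<Psi> t where a: "a = (\<Psi>, t)" by fastforce
  show ?case by (simp add: a Cons split: option.splits)
qed

lemma apply_seq_append_Some:
  "apply_seq L1 u = Some w \<Longrightarrow> apply_seq L2 w = Some w' \<Longrightarrow> apply_seq (L1 @ L2) u = Some w'"
  by (simp add: apply_seq_append)

lemma valid_sum_pos: "valid F L \<Longrightarrow> L \<noteq> [] \<Longrightarrow> sum_list (map snd L) > 0"
proof (induction L)
  case (Cons a L)
  obtain \<Psi> t where a: "a = (\<Psi>, t)" by fastforce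
  have "sum_list (map snd L) \<ge> 0"
    using Cons by (cases "L = []") (auto simp: a)
  then show ?case using Cons by (auto simp: a)
qed simp

lemma mkL_Cons: "mkL (((\<Phi>, Z), s, f) # L) p = ((\<lambda>r v. \<Phi> r v (f p)), s) # mkL L p"
  unfolding mkL_def by simp

lemma mkL_Nil[simp]: "mkL [] p = []" unfolding mkL_def by simp

lemma mkL_ne: "mkL L p \<noteq> [] \<longleftrightarrow> L \<noteq> []" unfolding mkL_def by simp

lemma mkL_sum: "sum_list (map snd (mkL L p)) = sum_list (map (\<lambda>(_, s, _). s) L)"
  unfolding mkL_def by (induction L) auto

lemma mkL_valid:
  assumes "\<forall>((\<Phi>, Z), s, f)\<in>set L. (\<Phi>, Z) \<in> F \<and> s > 0 \<and> f ` K \<subseteq> Z" "p \<in> K"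
  shows "valid F (mkL L p)"
  using assms unfolding valid_def mkL_def DD_def by fastforce

lemma family_cont:
  assumes "is_family (\<Phi>, Z)" "p \<in> Z" "t \<ge> 0" "\<Phi> t u p = Some x" "e > 0"
  shows "\<exists>\<delta>>0. \<forall>t'\<ge>0. \<forall>u'. \<forall>p'\<in>Z. \<bar>t - t'\<bar> + dist u u' + dist p p' < \<delta> \<longrightarrow>
           (\<exists>x'. \<Phi> t' u' p' = Some x' \<and> dist x x' < e)"
  using assms unfolding is_family_def by auto

lemma family_0:
  assumes "is_family (\<Phi>, Z)" "p \<in> Z"
  shows "\<Phi> 0 u p = Some u"
  using assms unfolding is_family_def by auto

lemma seq_cont:
  assumes "\<forall>((\<Phi>, Z), s, f)\<in>set L. is_family (\<Phi>, Z) \<and> s > 0 \<and> continuous_on K f \<and> f ` K \<subseteq> Z"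
    and "continuous_on K h" and "\<forall>p\<in>K. apply_seq (mkL L p) (h p) \<noteq> None"
  shows "continuous_on K (\<lambda>p. the (apply_seq (mkL L p) (h p)))"
  using assms
proof (induction L arbitrary: h)
  case Nil
  then show ?case by simp
next
  case (Cons a L)
  obtain \<Phi> Z s f where a: "a = ((\<Phi>, Z), s, f)" by (metis prod.collapse)
  have fam: "is_family (\<Phi>, Z)" and s: "s > 0" and cf: "continuous_on K f" and fK: "f ` K \<subseteq> Z"
    using Cons.prems(1) by (auto simp: a)
  define h' where "h' p = the (\<Phi> s (h p) (f p))" for p
  have some: "\<Phi> s (h p) (f p) = Some (h' p)" if "p \<in> K" for p
    using Cons.prems(3) that unfolding h'_def by (auto simp: a mkL_Cons split: option.splits)
  have eq: "apply_seq (mkL (a # L) p) (h p) = apply_seq (mkL L p) (h' p)" if "p \<in> K" for p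
    using some[OF that] by (simp add: a mkL_Cons)
  have ch': "continuous_on K h'"
    unfolding continuous_on_iff
  proof (intro ballI allI impI)
    fix p0 and e :: real assume p0: "p0 \<in> K" and e: "e > 0"
    obtain \<delta> where \<delta>: "\<delta> > 0" "\<forall>t'\<ge>0. \<forall>u'. \<forall>p'\<in>Z. \<bar>s - t'\<bar> + dist (h p0) u' + dist (f p0) p' < \<delta> \<longrightarrow>
           (\<exists>x'. \<Phi> t' u' p' = Some x' \<and> dist (h' p0) x' < e)"
      using family_cont[OF fam _ _ some[OF p0] e] fK p0 s by fastforce
    obtain d1 where d1: "d1 > 0" "\<forall>x'\<in>K. dist x' p0 < d1 \<longrightarrow> dist (h x') (h p0) < \<delta>/2"
      using Cons.prems(2) p0 \<delta>(1) unfolding continuous_on_iff by (meson half_gt_zero)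
    obtain d2 where d2: "d2 > 0" "\<forall>x'\<in>K. dist x' p0 < d2 \<longrightarrow> dist (f x') (f p0) < \<delta>/2"
      using cf p0 \<delta>(1) unfolding continuous_on_iff by (meson half_gt_zero)
    show "\<exists>d>0. \<forall>x'\<in>K. dist x' p0 < d \<longrightarrow> dist (h' x') (h' p0) < e"
    proof (intro exI[of _ "min d1 d2"] conjI ballI impI)
      fix p assume p: "p \<in> K" "dist p p0 < min d1 d2"
      then have "dist (h p) (h p0) < \<delta>/2" "dist (f p) (f p0) < \<delta>/2"
        using d1 d2 by auto
      then have "\<bar>s - s\<bar> + dist (h p0) (h p) + dist (f p0) (f p) < \<delta>"
        by (simp add: dist_commute)
      moreover have fpZ: "f p \<in> Z" using fK p by auto
      ultimately obtain x' where "\<Phi> s (h p) (f p) = Some x'" "dist (h' p0) x' < e"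
        using \<delta>(2)[rule_format, of s "f p" "h p"] s by auto
      then show "dist (h' p) (h' p0) < e" using some[OF p(1)] by (simp add: dist_commute)
    qed (use d1 d2 in auto)
  qed
  have "continuous_on K (\<lambda>p. the (apply_seq (mkL L p) (h' p)))"
    using Cons.IH[OF _ ch'] Cons.prems(1,3) eq by (auto simp: a)
  then show ?case by (rule continuous_on_eq) (simp add: eq)
qed


lemma usub_D:
  assumes "usub G F" "(\<Psi>, Z\<Psi>) \<in> G" "t > 0" "\<epsilon> > 0" "compact K1" "compact K2" "K2 \<subseteq> Z\<Psi>"
  shows "\<exists>L :: ('a::metric_space family \<times> real \<times> ('a \<Rightarrow> 'a)) list.
         L \<noteq> [] \<and>
         (\<forall>((\<Phi>, Z), s, f)\<in>set L. (\<Phi>, Z) \<in> F \<and> s > 0 \<and>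
              continuous_on K2 f \<and> f ` K2 \<subseteq> Z) \<and>
         sum_list (map (\<lambda>(_, s, _). s) L) \<le> t \<and>
         (\<exists>c<\<epsilon>. \<forall>u\<in>K1. \<forall>p\<in>K2. \<exists>x w.
            \<Psi> t u p = Some x \<and>
            apply_seq (mkL L p) u = Some w \<and>
            dist x w \<le> c)"
proof -
  from assms(1) have H: "\<forall>(\<Psi>, Z\<Psi>)\<in>G. \<forall>t>0. \<forall>\<epsilon>>0. \<forall>K1 K2. compact K1 \<and> compact K2 \<and> K2 \<subseteq> Z\<Psi> \<longrightarrow>
      (\<exists>L :: ('a family \<times> real \<times> ('a \<Rightarrow> 'a)) list.
         L \<noteq> [] \<and>
         (\<forall>((\<Phi>, Z), s, f)\<in>set L. (\<Phi>, Z) \<in> F \<and> s > 0 \<and>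
              continuous_on K2 f \<and> f ` K2 \<subseteq> Z) \<and>
         sum_list (map (\<lambda>(_, s, _). s) L) \<le> t \<and>
         (\<exists>c<\<epsilon>. \<forall>u\<in>K1. \<forall>p\<in>K2. \<exists>x w.
            \<Psi> t u p = Some x \<and>
            apply_seq (map (\<lambda>((\<Phi>, Z), s, f). ((\<lambda>r v. \<Phi> r v (f p)), s)) L) u = Some w \<and>
            dist x w \<le> c))"
    unfolding usub_def .
  note H2 = bspec[OF H assms(2), unfolded prod.case]
  note H3 = H2[rule_format, OF assms(3) assms(4), of K1 K2, OF conjI[OF assms(5) conjI[OF assms(6) assms(7)]]]
  show ?thesis unfolding mkL_def by (rule H3)
qed


context
  fixes \<FF> :: "'a::{real_vector, complete_space} family set"
    and Xs :: "nat \<Rightarrow> 'a set"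
  assumes FR: "frechet_space TYPE('a)"
    and FSG: "\<FF> \<subseteq> SG"
    and mono: "\<And>n. Xs n \<subseteq> Xs (Suc n)"
    and sub: "\<And>n. subspace (Xs n)"
    and sat: "\<And>n. ray (Xs n) \<in> Sat_u \<FF>"
    and dense: "closure (\<Union>n. Xs n) = UNIV"
begin

lemma ray_approx:
  assumes s: "s > 0" and e: "e > 0" and K1: "compact K1" and K2: "compact K2" and K2X: "K2 \<subseteq> Xs n"
  shows "\<exists>L. L \<noteq> [] \<and> (\<forall>((\<Phi>, Z), s', f)\<in>set L. (\<Phi>, Z) \<in> \<FF> \<and> s' > 0 \<and> continuous_on K2 f \<and> f ` K2 \<subseteq> Z)
     \<and> sum_list (map (\<lambda>(_, s', _). s') L) \<le> s
     \<and> (\<exists>c<e. \<forall>u\<in>K1. \<forall>p\<in>K2. \<exists>w. apply_seq (mkL L p) u = Some w \<and> dist (u + s *\<^sub>R p) w \<le> c)"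
proof -
  obtain G where G: "usub G \<FF>" "ray (Xs n) \<in> G"
    using sat[of n] unfolding Sat_u_def by blast
  have rG: "(fst (ray (Xs n)), Xs n) \<in> G" using G(2) by (simp add: ray_def)
  obtain L where LL: "L \<noteq> [] \<and> (\<forall>((\<Phi>, Z), s', f)\<in>set L. (\<Phi>, Z) \<in> \<FF> \<and> s' > 0 \<and> continuous_on K2 f \<and> f ` K2 \<subseteq> Z)
      \<and> sum_list (map (\<lambda>(_, s', _). s') L) \<le> s
      \<and> (\<exists>c<e. \<forall>u\<in>K1. \<forall>p\<in>K2. \<exists>x w. fst (ray (Xs n)) s u p = Some x \<and>
            apply_seq (mkL L p) u = Some w \<and> dist x w \<le> c)"
    using usub_D[OF G(1) rG s e K1 K2 K2X] by (rule exE)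
  note L1 = conjunct1[OF LL]
  note L2 = conjunct1[OF conjunct2[OF LL]]
  note L3 = conjunct1[OF conjunct2[OF conjunct2[OF LL]]]
  note L4 = conjunct2[OF conjunct2[OF conjunct2[OF LL]]]
  show ?thesis
  proof -
    from L4 obtain c where c: "c < e" and H: "\<forall>u\<in>K1. \<forall>p\<in>K2. \<exists>x w. fst (ray (Xs n)) s u p = Some x \<and>
            apply_seq (mkL L p) u = Some w \<and> dist x w \<le> c" by blast
    have "\<forall>u\<in>K1. \<forall>p\<in>K2. \<exists>w. apply_seq (mkL L p) u = Some w \<and> dist (u + s *\<^sub>R p) w \<le> c"
    proof (intro ballI)
      fix u p assume u: "u \<in> K1" and p: "p \<in> K2"
      then have pn: "p \<in> Xs n" using K2X by auto
      from bspec[OF bspec[OF H u] p] obtain x w where "fst (ray (Xs n)) s u p = Some x"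
        "apply_seq (mkL L p) u = Some w" "dist x w \<le> c" by blast
      then show "\<exists>w. apply_seq (mkL L p) u = Some w \<and> dist (u + s *\<^sub>R p) w \<le> c"
        using pn s by (auto simp: ray_def)
    qed
    with c have "\<exists>c<e. \<forall>u\<in>K1. \<forall>p\<in>K2. \<exists>w. apply_seq (mkL L p) u = Some w \<and> dist (u + s *\<^sub>R p) w \<le> c"
      by blast
    with L1 L2 L3 show ?thesis by blast
  qed
qed

lemma union_Xs: "x \<in> (\<Union>n. Xs n) \<Longrightarrow> \<exists>n. x \<in> Xs n" by blast

lemma ray_step:
  assumes s: "s > 0" and \<eta>: "\<eta> > 0"
  shows "\<exists>L w'. L \<noteq> [] \<and> valid \<FF> L \<and> sum_list (map snd L) \<le> s \<and> apply_seq L w = Some w' \<and> dist w' v < \<eta>"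
proof -
  have "v - w \<in> closure (\<Union>n. Xs n)" using dense by simp
  then obtain y where y: "y \<in> (\<Union>n. Xs n)" "dist y (v - w) < \<eta>/2"
    using \<eta> unfolding closure_approachable by (meson half_gt_zero)
  then obtain n where yn: "y \<in> Xs n" by blast
  define p where "p = (1/s) *\<^sub>R y"
  have pn: "p \<in> Xs n" unfolding p_def using sub[of n] yn by (simp add: subspace_scale)
  have sp: "s *\<^sub>R p = y" unfolding p_def using s by simp
  obtain L where L: "L \<noteq> []" "\<forall>((\<Phi>, Z), s', f)\<in>set L. (\<Phi>, Z) \<in> \<FF> \<and> s' > 0 \<and> continuous_on {p} f \<and> f ` {p} \<subseteq> Z"
     "sum_list (map (\<lambda>(_, s', _). s') L) \<le> s"
     and c: "\<exists>c<\<eta>/2. \<forall>u\<in>{w}. \<forall>p'\<in>{p}. \<exists>w'. apply_seq (mkL L p') u = Some w' \<and> dist (u + s *\<^sub>R p') w' \<le> c"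
    using ray_approx[OF s half_gt_zero[OF \<eta>] compact_sing compact_sing, of p n w] pn by auto
  from c obtain w' where w': "apply_seq (mkL L p) w = Some w'" "dist (w + y) w' < \<eta>/2"
    using sp by fastforce
  have "dist (w + y) v = dist y (v - w)"
    using fr_ti[OF FR, of y w "v - w"] by (simp add: add.commute)
  then have "dist w' v < \<eta>" using w'(2) y(2) dist_triangle[of w' v "w + y"] by (simp add: dist_commute)
  moreover have "valid \<FF> (mkL L p)" by (rule mkL_valid[of _ _ "{p}"]) (use L in auto)
  ultimately show ?thesis using L w' by (intro exI[of _ "mkL L p"] exI[of _ w']) (simp add: mkL_ne mkL_sum)
qed

lemma exists_sg: "\<exists>\<Phi> Z q. (\<Phi>, Z) \<in> \<FF> \<and> q \<in> Z"
proof -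
  have "0 \<in> Xs 0" using sub[of 0] by (simp add: subspace_0)
  then have X0: "{0} \<subseteq> Xs 0" by simp
  obtain L where LL: "L \<noteq> [] \<and> (\<forall>((\<Phi>, Z), s', f)\<in>set L. (\<Phi>, Z) \<in> \<FF> \<and> s' > 0 \<and> continuous_on {0} f \<and> f ` {0} \<subseteq> Z)
      \<and> sum_list (map (\<lambda>(_, s', _). s') L) \<le> 1
      \<and> (\<exists>c<1. \<forall>u\<in>{0}. \<forall>p\<in>{0}. \<exists>w. apply_seq (mkL L p) u = Some w \<and> dist (u + 1 *\<^sub>R p) w \<le> c)"
    using ray_approx[OF zero_less_one zero_less_one compact_sing compact_sing X0] by (rule exE)
  obtain a where a: "a \<in> set L" using conjunct1[OF LL] by (cases L) auto
  obtain \<Phi> Z s' f where aa: "a = ((\<Phi>, Z), s', f)" by (metis prod.collapse)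
  have "(\<Phi>, Z) \<in> \<FF> \<and> s' > 0 \<and> continuous_on {0} f \<and> f ` {0} \<subseteq> Z"
    using bspec[OF conjunct1[OF conjunct2[OF LL]] a] unfolding aa by simp
  then show ?thesis by blast
qed

lemma fill:
  assumes T: "T > 0" and \<eta>: "\<eta> > 0"
  shows "\<exists>L w. L \<noteq> [] \<and> valid \<FF> L \<and> sum_list (map snd L) = T \<and> apply_seq L u = Some w \<and> dist w v < \<eta>"
proof -
  obtain \<Phi> Z q where \<Phi>Z: "(\<Phi>, Z) \<in> \<FF>" and q: "q \<in> Z" using exists_sg by blast
  have fam: "is_family (\<Phi>, Z)" using FSG \<Phi>Z unfolding SG_def by blast
  define \<Psi> where "\<Psi> = (\<lambda>t u. \<Phi> t u q)"
  have \<Psi>D: "\<Psi> \<in> DD \<FF>" unfolding DD_def \<Psi>_def using \<Phi>Z q by blast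
  obtain \<delta> where \<delta>: "\<delta> > 0" and h\<delta>: "\<forall>t'\<ge>0. \<forall>u'. \<forall>p'\<in>Z. \<bar>0 - t'\<bar> + dist v u' + dist q p' < \<delta> \<longrightarrow>
           (\<exists>x'. \<Phi> t' u' p' = Some x' \<and> dist v x' < \<eta>)"
    using family_cont[OF fam q order_refl family_0[OF fam q] \<eta>] by blast
  have step: "\<exists>x'. \<Psi> t' w = Some x' \<and> dist x' v < \<eta>" if "0 \<le> t'" "t' + dist w v < \<delta>" for t' w
  proof -
    have "\<bar>0 - t'\<bar> + dist v w + dist q q < \<delta>" using that by (simp add: dist_commute)
    then show ?thesis using h\<delta>[rule_format, OF that(1) q] unfolding \<Psi>_def by (auto simp: dist_commute)
  qed
  define h where "h = \<delta>/2"
  have h: "h > 0" using \<delta> h_def by simp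
  have claim: "\<forall>w T. dist w v < h \<longrightarrow> 0 < T \<longrightarrow> T \<le> real k * (h/2) \<longrightarrow>
      (\<exists>L w'. L \<noteq> [] \<and> valid \<FF> L \<and> sum_list (map snd L) = T \<and> apply_seq L w = Some w' \<and> dist w' v < \<eta>)" for k
  proof (induction k)
    case 0
    then show ?case by auto
  next
    case (Suc k)
    show ?case
    proof (intro allI impI)
      fix w T assume w: "dist w v < h" and T0: "0 < T" and Tk: "T \<le> real (Suc k) * (h/2)"
      show "\<exists>L w'. L \<noteq> [] \<and> valid \<FF> L \<and> sum_list (map snd L) = T \<and> apply_seq L w = Some w' \<and> dist w' v < \<eta>"
      proof (cases "T \<le> h")
        case True
        then obtain x' where x': "\<Psi> T w = Some x'" "dist x' v < \<eta>"
          using step[of T w] T0 w h_def by auto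
        show ?thesis
          by (rule exI[of _ "[(\<Psi>, T)]"], rule exI[of _ x']) (use x' T0 \<Psi>D in \<open>simp add: valid_def\<close>)
      next
        case False
        obtain w1 where w1: "\<Psi> (h/2) w = Some w1"
          using step[of "h/2" w] w h h_def by auto
        obtain L2 w2 where L2: "L2 \<noteq> []" "valid \<FF> L2" "sum_list (map snd L2) \<le> h/2"
            "apply_seq L2 w1 = Some w2" "dist w2 v < h"
          using ray_step[of "h/2" h w1 v] h by auto
        define \<sigma> where "\<sigma> = sum_list (map snd L2)"
        have \<sigma>: "\<sigma> > 0" unfolding \<sigma>_def by (rule valid_sum_pos[OF L2(2,1)])
        define T' where "T' = T - h/2 - \<sigma>"
        have T'0: "T' > 0" using False L2(3) unfolding T'_def \<sigma>_def by simp
        have T'k: "T' \<le> real k * (h/2)" using Tk \<sigma> unfolding T'_def by (simp add: algebra_simps)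
        obtain L3 w3 where L3: "L3 \<noteq> []" "valid \<FF> L3" "sum_list (map snd L3) = T'"
            "apply_seq L3 w2 = Some w3" "dist w3 v < \<eta>"
          using Suc.IH L2(5) T'0 T'k by blast
        have "apply_seq ((\<Psi>, h/2) # L2 @ L3) w = Some w3"
          using w1 apply_seq_append_Some[OF L2(4) L3(4)] by simp
        moreover have "sum_list (map snd ((\<Psi>, h/2) # L2 @ L3)) = T"
          using L3(3) unfolding T'_def \<sigma>_def by simp
        moreover have "valid \<FF> ((\<Psi>, h/2) # L2 @ L3)" using \<Psi>D h L2(2) L3(2) by simp
        ultimately show ?thesis using L3(5) by blast
      qed
    qed
  qed
  obtain L1 w1 where L1: "L1 \<noteq> []" "valid \<FF> L1" "sum_list (map snd L1) \<le> T/2"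
      "apply_seq L1 u = Some w1" "dist w1 v < h"
    using ray_step[of "T/2" h u v] h T by auto
  define T' where "T' = T - sum_list (map snd L1)"
  have T'0: "T' > 0" using L1(3) T unfolding T'_def by simp
  define k where "k = nat \<lceil>T' / (h/2)\<rceil>"
  have "T' / (h/2) \<le> real k" unfolding k_def by linarith
  then have T'k: "T' \<le> real k * (h/2)" using h by (simp add: divide_le_eq)
  obtain L2 w2 where L2: "L2 \<noteq> []" "valid \<FF> L2" "sum_list (map snd L2) = T'"
      "apply_seq L2 w1 = Some w2" "dist w2 v < \<eta>"
    using claim[of k] L1(5) T'0 T'k by blast
  show ?thesis
  proof (intro exI conjI)
    show "apply_seq (L1 @ L2) u = Some w2" by (rule apply_seq_append_Some[OF L1(4) L2(4)])
    show "sum_list (map snd (L1 @ L2)) = T" using L2(3) unfolding T'_def by simp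
  qed (use L1 L2 in auto)
qed

end


lemma abs_le_L2: "finite A \<Longrightarrow> i \<in> A \<Longrightarrow> \<bar>f i\<bar> \<le> L2_set f A"
proof -
  assume "finite A" "i \<in> A"
  then have "\<bar>f i\<bar> \<le> L2_set (\<lambda>j. \<bar>f j\<bar>) A" by (rule member_le_L2_set)
  moreover have "L2_set (\<lambda>j. \<bar>f j\<bar>) A = L2_set f A" unfolding L2_set_def by simp
  ultimately show ?thesis by simp
qed

lemma cube_compact: "compact {x::nat\<Rightarrow>real. \<forall>i. x i \<in> (if i < m then {-r..r} else {0})}"
proof -
  have "compactin (product_topology (\<lambda>i. euclidean) UNIV) (PiE UNIV (\<lambda>i. if i < m then {-r..r} else {0::real}))"
    by (subst compactin_PiE) auto
  moreover have "PiE UNIV (\<lambda>i. if i < m then {-r..r} else {0::real}) = {x::nat\<Rightarrow>real. \<forall>i. x i \<in> (if i < m then {-r..r} else {0})}"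
    by (simp add: PiE_UNIV_domain Pi_def)
  ultimately show ?thesis by (simp add: euclidean_product_topology)
qed

lemma cont_coord: "continuous_on S (\<lambda>x::nat\<Rightarrow>real. x i)"
  by (rule continuous_on_subset[OF continuous_on_product_coordinates]) simp

lemma cont_L2: "continuous_on S (\<lambda>x::nat\<Rightarrow>real. L2_set x {..<m})"
  unfolding L2_set_def by (intro continuous_intros cont_coord)

lemma closed_supp: "closed {x::nat\<Rightarrow>real. \<forall>i\<ge>m. x i = 0}"
proof -
  have "{x::nat\<Rightarrow>real. \<forall>i\<ge>m. x i = 0} = (\<Inter>i\<in>{m..}. {x. x i = 0})" by auto
  moreover have "closed {x::nat\<Rightarrow>real. x i = 0}" for i
    using closed_Collect_eq[OF cont_coord[of UNIV i] continuous_on_const] by simp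
  ultimately show ?thesis by auto
qed

lemma disc_compact:
  assumes "r \<ge> 0"
  shows "compact {x::nat\<Rightarrow>real. (\<forall>i\<ge>m. x i = 0) \<and> L2_set x {..<m} \<le> r}"
    and "compact {x::nat\<Rightarrow>real. (\<forall>i\<ge>m. x i = 0) \<and> L2_set x {..<m} = r}"
proof -
  let ?C = "{x::nat\<Rightarrow>real. \<forall>i. x i \<in> (if i < m then {-r..r} else {0})}"
  have sub: "x \<in> ?C" if "\<forall>i\<ge>m. x i = 0" "L2_set x {..<m} \<le> r" for x
  proof -
    have "x i \<in> {-r..r}" if "i < m" for i
    proof -
      have "\<bar>x i\<bar> \<le> r" using abs_le_L2[of "{..<m}" i x] that \<open>L2_set x {..<m} \<le> r\<close> by simp
      then show ?thesis by (simp add: abs_le_iff)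
    qed
    then show ?thesis using that by auto
  qed
  have c1: "closed {x::nat\<Rightarrow>real. L2_set x {..<m} \<le> r}"
    by (rule closed_Collect_le[OF cont_L2 continuous_on_const])
  have c2: "closed {x::nat\<Rightarrow>real. L2_set x {..<m} = r}"
    by (rule closed_Collect_eq[OF cont_L2 continuous_on_const])
  have "{x::nat\<Rightarrow>real. (\<forall>i\<ge>m. x i = 0) \<and> L2_set x {..<m} \<le> r} = ?C \<inter> ({x. \<forall>i\<ge>m. x i = 0} \<inter> {x. L2_set x {..<m} \<le> r})"
    using sub by blast
  moreover have "compact (?C \<inter> ({x. \<forall>i\<ge>m. x i = 0} \<inter> {x. L2_set x {..<m} \<le> r}))"
    by (rule compact_Int_closed[OF cube_compact closed_Int[OF closed_supp c1]])
  ultimately show "compact {x::nat\<Rightarrow>real. (\<forall>i\<ge>m. x i = 0) \<and> L2_set x {..<m} \<le> r}" by simp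
  have "{x::nat\<Rightarrow>real. (\<forall>i\<ge>m. x i = 0) \<and> L2_set x {..<m} = r} = ?C \<inter> ({x. \<forall>i\<ge>m. x i = 0} \<inter> {x. L2_set x {..<m} = r})"
    using sub by fastforce
  moreover have "compact (?C \<inter> ({x. \<forall>i\<ge>m. x i = 0} \<inter> {x. L2_set x {..<m} = r}))"
    by (rule compact_Int_closed[OF cube_compact closed_Int[OF closed_supp c2]])
  ultimately show "compact {x::nat\<Rightarrow>real. (\<forall>i\<ge>m. x i = 0) \<and> L2_set x {..<m} = r}" by simp
qed

lemma BAL:
  assumes FR: "frechet_space TYPE('a::{real_vector,complete_space})" and g: "\<gamma> > 0"
  shows "\<exists>\<rho>>0. \<forall>z::'a. \<forall>l. dist z 0 < \<rho> \<and> \<bar>l\<bar> \<le> 1 \<longrightarrow> dist (l *\<^sub>R z) 0 < \<gamma>"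
proof -
  obtain V where V: "open V" "convex V" "(0::'a) \<in> V" "V \<subseteq> ball 0 \<gamma>"
    using fr_lc[OF FR, of "ball 0 \<gamma>"] g by auto
  define W where "W = V \<inter> (uminus -` V)"
  have "continuous_on UNIV (uminus :: 'a \<Rightarrow> 'a)"
    using cont_neg[OF FR continuous_on_id] by simp
  then have "open (uminus -` V :: 'a set)" using V(1) by (simp add: open_vimage)
  then have oW: "open W" unfolding W_def using V(1) by auto
  have W0: "0 \<in> W" unfolding W_def using V(3) by simp
  obtain \<rho> where \<rho>: "\<rho> > 0" "ball 0 \<rho> \<subseteq> W" using oW W0 open_contains_ball by blast
  have key: "l *\<^sub>R z \<in> V" if "z \<in> W" "\<bar>l\<bar> \<le> 1" for z :: 'a and l
  proof (cases "l \<ge> 0")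
    case True
    have "l *\<^sub>R z + (1 - l) *\<^sub>R 0 \<in> V"
      by (rule convexD[OF V(2)]) (use that V(3) True in \<open>auto simp: W_def\<close>)
    then show ?thesis by simp
  next
    case False
    have "(-l) *\<^sub>R (-z) + (1 + l) *\<^sub>R 0 \<in> V"
      by (rule convexD[OF V(2)]) (use that V(3) False in \<open>auto simp: W_def\<close>)
    then show ?thesis by simp
  qed
  show ?thesis
  proof (intro exI[of _ \<rho>] conjI allI impI)
    fix z :: 'a and l :: real assume "dist z 0 < \<rho> \<and> \<bar>l\<bar> \<le> 1"
    then have "z \<in> W" "\<bar>l\<bar> \<le> 1" using \<rho> by (auto simp: dist_commute)
    then have "l *\<^sub>R z \<in> ball 0 \<gamma>" using key V(4) by blast
    then show "dist (l *\<^sub>R z) 0 < \<gamma>" by (simp add: dist_commute)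
  qed (use \<rho> in auto)
qed


locale coordsys =
  fixes Bs :: "'a::{real_vector,complete_space} set" and m :: nat and b :: "nat \<Rightarrow> 'a"
  assumes FR: "frechet_space TYPE('a)" and indep: "independent Bs" and fin: "finite Bs"
    and bij: "bij_betw b {..<m} Bs"
begin

definition cd :: "'a \<Rightarrow> nat \<Rightarrow> real" where
  "cd y = (\<lambda>i. if i < m then representation Bs y (b i) else 0)"

definition beta :: "(nat \<Rightarrow> real) \<Rightarrow> 'a" where
  "beta c = (\<Sum>i<m. c i *\<^sub>R b i)"

lemma b_in: "i < m \<Longrightarrow> b i \<in> Bs"
  using bij by (auto simp: bij_betw_def)

lemma sum_reindex: "(\<Sum>i<m. f (b i)) = (\<Sum>v\<in>Bs. f v)"
  using sum.reindex_bij_betw[OF bij, of f] by simp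

lemma cd_supp: "i \<ge> m \<Longrightarrow> cd y i = 0"
  unfolding cd_def by simp

lemma beta_cd: "y \<in> span Bs \<Longrightarrow> beta (cd y) = y"
proof -
  assume y: "y \<in> span Bs"
  have "beta (cd y) = (\<Sum>i<m. representation Bs y (b i) *\<^sub>R b i)"
    unfolding beta_def cd_def by simp
  also have "\<dots> = (\<Sum>v\<in>Bs. representation Bs y v *\<^sub>R v)"
    by (rule sum_reindex)
  also have "\<dots> = y" by (rule sum_representation_eq[OF indep y fin order_refl])
  finally show ?thesis .
qed

lemma beta_span: "beta c \<in> span Bs"
  unfolding beta_def by (intro span_sum span_scale span_base b_in) simp

lemma beta_diff: "beta (\<lambda>i. c i - c' i) = beta c - beta c'"
  unfolding beta_def by (simp add: scaleR_diff_left sum_subtractf)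

lemma beta_scale: "beta (\<lambda>i. l * c i) = l *\<^sub>R beta c"
  unfolding beta_def by (simp add: scaleR_sum_right)

lemma betaz:
  assumes supp: "\<forall>i\<ge>m. c i = 0" and z: "beta c = 0"
  shows "c = (\<lambda>i. 0)"
proof -
  define u where "u v = c (inv_into {..<m} b v)" for v
  have ub: "u (b i) = c i" if "i < m" for i
    using bij that unfolding u_def bij_betw_def by (simp add: inv_into_f_f)
  have "(\<Sum>v\<in>Bs. u v *\<^sub>R v) = (\<Sum>i<m. u (b i) *\<^sub>R b i)"
    by (rule sum_reindex[symmetric])
  also have "\<dots> = beta c" unfolding beta_def by (simp add: ub)
  finally have s0: "(\<Sum>v\<in>Bs. u v *\<^sub>R v) = 0" using z by simp
  have nd: "\<not> (\<exists>u. (\<exists>v\<in>Bs. u v \<noteq> 0) \<and> (\<Sum>v\<in>Bs. u v *\<^sub>R v) = 0)"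
    using indep unfolding dependent_finite[OF fin] .
  have "\<forall>v\<in>Bs. u v = 0"
  proof (rule ccontr)
    assume "\<not> (\<forall>v\<in>Bs. u v = 0)"
    then have "\<exists>v\<in>Bs. u v \<noteq> 0" by blast
    with s0 nd show False by blast
  qed
  then have "c i = 0" if "i < m" for i using ub[OF that] b_in[OF that] by simp
  then show ?thesis using supp by (metis not_le)
qed

lemma cd_beta:
  assumes supp: "\<forall>i\<ge>m. c i = 0"
  shows "cd (beta c) = c"
proof -
  have "beta (\<lambda>i. cd (beta c) i - c i) = beta (cd (beta c)) - beta c" by (rule beta_diff)
  also have "\<dots> = 0" using beta_cd[OF beta_span, of c] by simp
  finally have z: "beta (\<lambda>i. cd (beta c) i - c i) = 0" .
  have "(\<lambda>i. cd (beta c) i - c i) = (\<lambda>i. 0)"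
    by (rule betaz[OF _ z]) (simp add: cd_supp supp)
  then show ?thesis by (simp add: fun_eq_iff)
qed

lemma cd_diff: "y \<in> span Bs \<Longrightarrow> y' \<in> span Bs \<Longrightarrow> cd (y - y') = (\<lambda>i. cd y i - cd y' i)"
  unfolding cd_def by (auto simp: representation_diff[OF indep])

lemma beta_cont: "continuous_on S beta"
  unfolding beta_def
  by (intro cont_sum[OF FR] cont_scale[OF FR] cont_coord continuous_on_const) simp

lemma coordL:
  assumes \<eta>: "\<eta> > 0"
  shows "\<exists>\<gamma>>0. \<forall>y\<in>span Bs. dist y 0 < \<gamma> \<longrightarrow> L2_set (cd y) {..<m} < \<eta>"
proof (cases "m = 0")
  case True
  then show ?thesis using \<eta> by (intro exI[of _ 1]) auto
next
  case False
  define S where "S = {x::nat\<Rightarrow>real. (\<forall>i\<ge>m. x i = 0) \<and> L2_set x {..<m} = \<eta>}"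
  have cS: "compact S" unfolding S_def by (rule disc_compact(2)) (use \<eta> in simp)
  define c0 where "c0 = (\<lambda>i::nat. if i = 0 then \<eta> else 0)"
  have "L2_set c0 {..<m} = \<eta>"
  proof -
    have "(\<Sum>i<m. (c0 i)\<^sup>2) = \<eta>\<^sup>2" unfolding c0_def using False
      by (simp add: if_distrib[of "\<lambda>x. x\<^sup>2"] cong: if_cong)
    then show ?thesis unfolding L2_set_def using \<eta> by simp
  qed
  then have c0S: "c0 \<in> S" unfolding S_def c0_def using False by auto
  define K where "K = beta ` S"
  have cK: "compact K" unfolding K_def by (rule compact_continuous_image[OF beta_cont cS])
  have neK: "K \<noteq> {}" unfolding K_def using c0S by auto
  obtain z0 where z0: "z0 \<in> K" "\<forall>z\<in>K. dist z0 0 \<le> dist z 0"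
  proof -
    have "continuous_on K (\<lambda>z. dist z (0::'a))" by (intro continuous_intros)
    from continuous_attains_inf[OF cK neK this] show ?thesis using that by blast
  qed
  have "z0 \<noteq> 0"
  proof
    assume "z0 = 0"
    then obtain c where c: "c \<in> S" "beta c = 0" using z0(1) unfolding K_def by auto
    then have "c = (\<lambda>i. 0)" using betaz S_def by blast
    then show False using c(1) \<eta> unfolding S_def by (simp add: L2_set_def)
  qed
  then have g0: "dist z0 0 > 0" by simp
  obtain \<rho> where \<rho>: "\<rho> > 0" "\<forall>z::'a. \<forall>l. dist z 0 < \<rho> \<and> \<bar>l\<bar> \<le> 1 \<longrightarrow> dist (l *\<^sub>R z) 0 < dist z0 0"
    using BAL[OF FR g0] by blast
  show ?thesis
  proof (intro exI[of _ \<rho>] conjI ballI impI)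
    fix y assume y: "y \<in> span Bs" and dy: "dist y 0 < \<rho>"
    show "L2_set (cd y) {..<m} < \<eta>"
    proof (rule ccontr)
      assume "\<not> L2_set (cd y) {..<m} < \<eta>"
      then have N: "L2_set (cd y) {..<m} \<ge> \<eta>" by simp
      define l where "l = \<eta> / L2_set (cd y) {..<m}"
      have l: "0 < l" "l \<le> 1" unfolding l_def using N \<eta> by auto
      define c where "c = (\<lambda>i. l * cd y i)"
      have "L2_set c {..<m} = \<eta>" unfolding c_def L2_scale l_def using N \<eta> by simp
      then have "c \<in> S" unfolding S_def c_def using cd_supp by simp
      then have "beta c \<in> K" unfolding K_def by simp
      then have "dist z0 0 \<le> dist (beta c) 0" using z0(2) by blast
      moreover have "beta c = l *\<^sub>R y" unfolding c_def beta_scale beta_cd[OF y] ..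
      moreover have "dist (l *\<^sub>R y) 0 < dist z0 0" using \<rho>(2) dy l by auto
      ultimately show False by simp
    qed
  qed (use \<rho> in simp)
qed

end


context coordsys
begin

lemma cd_cont: "continuous_on (span Bs) cd"
proof (rule continuous_on_coordinatewise_then_product)
  fix i
  show "continuous_on (span Bs) (\<lambda>y. cd y i)"
    unfolding continuous_on_iff
  proof (intro ballI allI impI)
    fix y0 and e :: real assume y0: "y0 \<in> span Bs" and e: "e > 0"
    obtain \<gamma> where \<gamma>: "\<gamma> > 0" "\<forall>y\<in>span Bs. dist y 0 < \<gamma> \<longrightarrow> L2_set (cd y) {..<m} < e"
      using coordL[OF e] by blast
    show "\<exists>d>0. \<forall>y\<in>span Bs. dist y y0 < d \<longrightarrow> dist (cd y i) (cd y0 i) < e"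
    proof (intro exI[of _ \<gamma>] conjI ballI impI)
      fix y assume y: "y \<in> span Bs" and dy: "dist y y0 < \<gamma>"
      have yy: "y - y0 \<in> span Bs" using y y0 by (simp add: span_diff)
      have "dist (y - y0) 0 < \<gamma>" using dy d0[OF FR, of y y0] by simp
      then have L: "L2_set (cd (y - y0)) {..<m} < e" using \<gamma>(2) yy by blast
      show "dist (cd y i) (cd y0 i) < e"
      proof (cases "i < m")
        case True
        have "\<bar>cd (y - y0) i\<bar> \<le> L2_set (cd (y - y0)) {..<m}" using True by (intro abs_le_L2) auto
        then show ?thesis using L cd_diff[OF y y0] by (simp add: dist_real_def)
      next
        case False
        then show ?thesis using e by (simp add: cd_supp)
      qed
    qed (use \<gamma> in auto)
  qed
qed

lemma comb_small:
  assumes g: "\<gamma> > 0"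
  shows "\<exists>\<rho>>0. \<forall>d x. (\<forall>i<m. dist (d i) 0 < \<rho>) \<and> (\<forall>i<m. \<bar>x i\<bar> \<le> 1) \<longrightarrow> dist (\<Sum>i<m. x i *\<^sub>R d i) (0::'a) < \<gamma>"
proof -
  define g' where "g' = \<gamma> / (real m + 1)"
  have g': "g' > 0" unfolding g'_def using g by simp
  obtain \<rho> where \<rho>: "\<rho> > 0" "\<forall>z::'a. \<forall>l. dist z 0 < \<rho> \<and> \<bar>l\<bar> \<le> 1 \<longrightarrow> dist (l *\<^sub>R z) 0 < g'"
    using BAL[OF FR g'] by blast
  show ?thesis
  proof (intro exI[of _ \<rho>] conjI allI impI)
    fix d :: "nat \<Rightarrow> 'a" and x :: "nat \<Rightarrow> real"
    assume a: "(\<forall>i<m. dist (d i) 0 < \<rho>) \<and> (\<forall>i<m. \<bar>x i\<bar> \<le> 1)"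
    have "dist (\<Sum>i<m. x i *\<^sub>R d i) 0 \<le> (\<Sum>i<m. dist (x i *\<^sub>R d i) 0)"
      by (rule dsum[OF FR]) simp
    also have "\<dots> \<le> (\<Sum>i<m. g')"
      by (rule sum_mono) (use a \<rho>(2) in \<open>auto intro: less_imp_le\<close>)
    also have "\<dots> = real m * g'" by simp
    also have "\<dots> < \<gamma>" unfolding g'_def using g
      by (simp add: field_simps)
    finally show "dist (\<Sum>i<m. x i *\<^sub>R d i) 0 < \<gamma>" .
  qed (use \<rho> in auto)
qed

lemma choose_r:
  assumes g: "\<gamma> > 0"
  shows "\<exists>r>0. r \<le> 1 \<and> (\<forall>x. (\<forall>i<m. \<bar>x i\<bar> \<le> r) \<longrightarrow> dist (beta x) 0 < \<gamma>)"
proof -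
  obtain \<rho> where \<rho>: "\<rho> > 0" "\<forall>d x. (\<forall>i<m. dist (d i) 0 < \<rho>) \<and> (\<forall>i<m. \<bar>x i\<bar> \<le> 1) \<longrightarrow> dist (\<Sum>i<m. x i *\<^sub>R d i) (0::'a) < \<gamma>"
    using comb_small[OF g] by blast
  have ev: "\<forall>i\<in>{..<m}. eventually (\<lambda>l::real. dist (l *\<^sub>R b i) 0 < \<rho>) (at 0)"
  proof
    fix i assume "i \<in> {..<m}"
    have "continuous_on UNIV (\<lambda>l::real. l *\<^sub>R b i)"
      by (intro cont_scale[OF FR] continuous_on_id continuous_on_const)
    then have "\<exists>d>0. \<forall>l\<in>UNIV. dist l 0 < d \<longrightarrow> dist (l *\<^sub>R b i) (0 *\<^sub>R b i) < \<rho>"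
      unfolding continuous_on_iff using \<rho>(1) by blast
    then obtain d where d: "d > 0" "\<forall>l\<in>UNIV. dist l 0 < d \<longrightarrow> dist (l *\<^sub>R b i) (0 *\<^sub>R b i) < \<rho>"
      by blast
    show "eventually (\<lambda>l::real. dist (l *\<^sub>R b i) 0 < \<rho>) (at 0)"
      unfolding eventually_at by (rule exI[of _ d]) (use d in simp)
  qed
  have "eventually (\<lambda>l::real. \<forall>i\<in>{..<m}. dist (l *\<^sub>R b i) 0 < \<rho>) (at 0)"
    by (rule eventually_ball_finite[OF _ ev]) simp
  then obtain d where d: "d > 0" "\<forall>l::real. l \<noteq> 0 \<and> dist l 0 < d \<longrightarrow> (\<forall>i<m. dist (l *\<^sub>R b i) 0 < \<rho>)"
    unfolding eventually_at by auto
  define r where "r = min 1 (d/2)"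
  have r: "r > 0" "r \<le> 1" "r < d" unfolding r_def using d by auto
  have rb: "\<forall>i<m. dist (r *\<^sub>R b i) 0 < \<rho>" using d(2) r by (auto simp: dist_real_def)
  show ?thesis
  proof (intro exI[of _ r] conjI allI impI)
    show "r > 0" by (rule r(1))
    show "r \<le> 1" by (rule r(2))
    fix x assume x: "\<forall>i<m. \<bar>x i\<bar> \<le> r"
    have e1: "beta x = (\<Sum>i<m. (x i / r) *\<^sub>R (r *\<^sub>R b i))"
      unfolding beta_def
    proof (rule sum.cong[OF refl])
      fix i show "x i *\<^sub>R b i = (x i / r) *\<^sub>R (r *\<^sub>R b i)" using r(1) by simp
    qed
    have xb: "\<forall>i<m. \<bar>x i / r\<bar> \<le> 1"
    proof (intro allI impI)
      fix i assume "i < m"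
      then have "\<bar>x i\<bar> \<le> r" using x by blast
      have "\<bar>x i / r\<bar> = \<bar>x i\<bar> / r" using r(1) by (simp add: abs_divide)
      also have "\<dots> \<le> r / r" using \<open>\<bar>x i\<bar> \<le> r\<close> r(1) by (intro divide_right_mono) auto
      also have "\<dots> = 1" using r(1) by simp
      finally show "\<bar>x i / r\<bar> \<le> 1" .
    qed
    have "dist (\<Sum>i<m. (x i / r) *\<^sub>R (r *\<^sub>R b i)) 0 < \<gamma>"
      by (rule \<rho>(2)[rule_format, OF conjI[OF rb xb]])
    then show "dist (beta x) 0 < \<gamma>" by (simp only: e1)
  qed
qed

end


context
  fixes \<FF> :: "'a::{real_vector, complete_space} family set"
    and Xs :: "nat \<Rightarrow> 'a set"
  assumes FR: "frechet_space TYPE('a)"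
    and FSG: "\<FF> \<subseteq> SG"
    and mono: "\<And>n. Xs n \<subseteq> Xs (Suc n)"
    and sub: "\<And>n. subspace (Xs n)"
    and sat: "\<And>n. ray (Xs n) \<in> Sat_u \<FF>"
    and dense: "closure (\<Union>n. Xs n) = UNIV"
begin

lemmas fillF = fill[OF FR FSG mono sub sat dense]
lemmas ray_approxF = ray_approx[OF FR FSG mono sub sat dense]
lemmas exists_sgF = exists_sg[OF FR FSG mono sub sat dense]

lemma Xs_mono: "a \<le> c \<Longrightarrow> Xs a \<subseteq> Xs c"
  by (rule lift_Suc_mono_le[of Xs, OF mono])

lemma approx_basis:
  fixes m :: nat and b :: "nat \<Rightarrow> 'a"
  assumes \<rho>: "\<rho> > 0"
  shows "\<exists>e N. \<forall>i<m. e i \<in> Xs N \<and> dist (e i) (b i) < \<rho>"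
proof -
  have "\<forall>i. \<exists>y n. y \<in> Xs n \<and> dist y (b i) < \<rho>"
  proof
    fix i
    have "b i \<in> closure (\<Union>n. Xs n)" using dense by simp
    then obtain y where "y \<in> (\<Union>n. Xs n)" "dist y (b i) < \<rho>"
      using \<rho> unfolding closure_approachable by blast
    then show "\<exists>y n. y \<in> Xs n \<and> dist y (b i) < \<rho>" by blast
  qed
  then obtain e nn where e: "\<forall>i. e i \<in> Xs (nn i) \<and> dist (e i) (b i) < \<rho>"
    by metis
  define N where "N = Max (insert 0 (nn ` {..<m}))"
  have "nn i \<le> N" if "i < m" for i unfolding N_def using that by (intro Max_ge) auto
  then have "\<forall>i<m. e i \<in> Xs N \<and> dist (e i) (b i) < \<rho>" using e Xs_mono by blast
  then show ?thesis by blast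
qed

lemma part2_pos:
  fixes \<pi> :: "'a \<Rightarrow> 'a" and m :: nat and b :: "nat \<Rightarrow> 'a"
  assumes cs: "coordsys Bs m b" and mpos: "m > 0" and spanR: "span Bs = range \<pi>"
    and lin: "linear \<pi>" and cont: "continuous_on UNIV \<pi>" and idem: "\<forall>x. \<pi> (\<pi> x) = \<pi> x"
    and t: "t > 0" and \<epsilon>: "\<epsilon> > 0"
  shows "\<exists>L w. L \<noteq> [] \<and> valid \<FF> L \<and> sum_list (map snd L) = t \<and> apply_seq L u = Some w
           \<and> \<pi> w = \<pi> v \<and> dist w v < \<epsilon>"
proof -
  interpret cs: coordsys Bs m b by (rule cs)
  have \<pi>V: "\<pi> y \<in> span Bs" for y using spanR by auto
  have \<pi>id: "\<pi> y = y" if yV: "y \<in> span Bs" for y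
  proof -
    obtain x where "y = \<pi> x" using yV spanR by auto
    then show ?thesis using idem by simp
  qed
  have \<pi>0: "\<pi> 0 = 0" using lin by (rule linear_0)
  have \<pi>diff: "\<pi> (x - y) = \<pi> x - \<pi> y" for x y using lin by (rule linear_diff)
  have \<pi>add: "\<pi> (x + y) = \<pi> x + \<pi> y" for x y using lin by (rule linear_add)
  obtain r where r: "r > 0" "r \<le> 1" "\<forall>x. (\<forall>i<m. \<bar>x i\<bar> \<le> r) \<longrightarrow> dist (cs.beta x) 0 < \<epsilon>/8"
    using cs.choose_r[of "\<epsilon>/8"] \<epsilon> by auto
  obtain \<gamma>1 where \<gamma>1: "\<gamma>1 > 0" "\<forall>y\<in>span Bs. dist y 0 < \<gamma>1 \<longrightarrow> L2_set (cs.cd y) {..<m} < r/4"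
    using cs.coordL[of "r/4"] r(1) by auto
  obtain \<delta>1 where \<delta>1: "\<delta>1 > 0" "\<forall>x y. dist x y < \<delta>1 \<longrightarrow> dist (\<pi> x) (\<pi> y) < \<gamma>1"
    using lin_uc[OF FR lin cont \<gamma>1(1)] by blast
  obtain \<rho>1 where \<rho>1: "\<rho>1 > 0" "\<forall>d x. (\<forall>i<m. dist (d i) 0 < \<rho>1) \<and> (\<forall>i<m. \<bar>x i\<bar> \<le> 1) \<longrightarrow> dist (\<Sum>i<m. x i *\<^sub>R d i) (0::'a) < \<epsilon>/8"
    using cs.comb_small[of "\<epsilon>/8"] \<epsilon> by auto
  obtain \<rho>2 where \<rho>2: "\<rho>2 > 0" "\<forall>d x. (\<forall>i<m. dist (d i) 0 < \<rho>2) \<and> (\<forall>i<m. \<bar>x i\<bar> \<le> 1) \<longrightarrow> dist (\<Sum>i<m. x i *\<^sub>R d i) (0::'a) < \<delta>1"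
    using cs.comb_small[OF \<delta>1(1)] by auto
  obtain e N where eN: "\<forall>i<m. e i \<in> Xs N \<and> dist (e i) (b i) < min \<rho>1 \<rho>2"
    using approx_basis[of "min \<rho>1 \<rho>2" m b] \<rho>1(1) \<rho>2(1) by auto
  define \<beta>' where "\<beta>' x = (\<Sum>i<m. x i *\<^sub>R e i)" for x
  have Fa: "dist (\<beta>' x) 0 < \<epsilon>/4" if hx: "\<forall>i<m. \<bar>x i\<bar> \<le> r" for x
  proof -
    have eq: "\<beta>' x = cs.beta x + (\<Sum>i<m. x i *\<^sub>R (e i - b i))"
      unfolding \<beta>'_def cs.beta_def by (simp add: scaleR_diff_right sum_subtractf)
    have x1: "\<forall>i<m. \<bar>x i\<bar> \<le> 1" using hx r(2) by fastforce
    have d1: "\<forall>i<m. dist (e i - b i) 0 < \<rho>1"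
      using eN d0[OF FR, of "e _" "b _"] by fastforce
    have "dist (\<Sum>i<m. x i *\<^sub>R (e i - b i)) 0 < \<epsilon>/8"
      using \<rho>1(2)[rule_format, OF conjI[OF d1 x1]] .
    moreover have "dist (cs.beta x) 0 < \<epsilon>/8" using r(3) hx by blast
    moreover have "dist (\<beta>' x) 0 \<le> dist (cs.beta x) 0 + dist (\<Sum>i<m. x i *\<^sub>R (e i - b i)) 0"
      using dadd[OF FR, of "cs.beta x" "\<Sum>i<m. x i *\<^sub>R (e i - b i)" 0 0] eq by simp
    ultimately show ?thesis by linarith
  qed
  have Fb: "L2_set (cs.cd (\<pi> (\<Sum>i<m. x i *\<^sub>R (b i - e i)))) {..<m} < r/4" if hx: "\<forall>i<m. \<bar>x i\<bar> \<le> r" for x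
  proof -
    have x1: "\<forall>i<m. \<bar>x i\<bar> \<le> 1" using hx r(2) by fastforce
    have d2: "\<forall>i<m. dist (b i - e i) 0 < \<rho>2"
      using eN d0[OF FR, of "b _" "e _"] by (fastforce simp: dist_commute)
    have "dist (\<Sum>i<m. x i *\<^sub>R (b i - e i)) 0 < \<delta>1"
      using \<rho>2(2)[rule_format, OF conjI[OF d2 x1]] .
    then have "dist (\<pi> (\<Sum>i<m. x i *\<^sub>R (b i - e i))) (\<pi> 0) < \<gamma>1" using \<delta>1(2) by blast
    then show ?thesis using \<gamma>1(2) \<pi>V \<pi>0 by simp
  qed
  obtain \<gamma>2 where \<gamma>2: "\<gamma>2 > 0" "\<forall>y\<in>span Bs. dist y 0 < \<gamma>2 \<longrightarrow> L2_set (cs.cd y) {..<m} < r/2"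
    using cs.coordL[of "r/2"] r(1) by auto
  obtain \<delta>2 where \<delta>2: "\<delta>2 > 0" "\<forall>x y. dist x y < \<delta>2 \<longrightarrow> dist (\<pi> x) (\<pi> y) < \<gamma>2"
    using lin_uc[OF FR lin cont \<gamma>2(1)] by blast
  define \<epsilon>1 where "\<epsilon>1 = min (\<epsilon>/4) \<delta>2"
  have \<epsilon>1: "\<epsilon>1 > 0" "\<epsilon>1 \<le> \<epsilon>/4" "\<epsilon>1 \<le> \<delta>2" unfolding \<epsilon>1_def using \<epsilon> \<delta>2 by auto
  obtain \<Phi> Z q where \<Phi>Z: "(\<Phi>, Z) \<in> \<FF>" and q: "q \<in> Z" using exists_sgF by blast
  have fam: "is_family (\<Phi>, Z)" using FSG \<Phi>Z unfolding SG_def by blast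
  define \<Psi> where "\<Psi> = (\<lambda>t u. \<Phi> t u q)"
  have \<Psi>D: "\<Psi> \<in> DD \<FF>" unfolding DD_def \<Psi>_def using \<Phi>Z q by blast
  obtain \<delta> where \<delta>: "\<delta> > 0" and h\<delta>: "\<forall>t'\<ge>0. \<forall>u'. \<forall>p'\<in>Z. \<bar>0 - t'\<bar> + dist v u' + dist q p' < \<delta> \<longrightarrow>
           (\<exists>x'. \<Phi> t' u' p' = Some x' \<and> dist v x' < \<epsilon>1)"
    using family_cont[OF fam q order_refl family_0[OF fam q] \<epsilon>1(1)] by blast
  have step: "\<exists>x'. \<Psi> t' w = Some x' \<and> dist v x' < \<epsilon>1" if "0 \<le> t'" "t' + dist w v < \<delta>" for t' w
  proof -
    have "\<bar>0 - t'\<bar> + dist v w + dist q q < \<delta>" using that by (simp add: dist_commute)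
    then show ?thesis using h\<delta>[rule_format, OF that(1) q] unfolding \<Psi>_def by auto
  qed
  define \<theta> where "\<theta> = min t \<delta> / 2"
  have \<theta>: "\<theta> > 0" "\<theta> < t" "\<theta> \<le> \<delta>/2" unfolding \<theta>_def using t \<delta> by auto
  obtain LP wp where LP: "LP \<noteq> []" "valid \<FF> LP" "sum_list (map snd LP) = t - \<theta>"
      "apply_seq LP u = Some wp" "dist wp v < \<delta>/2"
    using fillF[of "t - \<theta>" "\<delta>/2" u v] \<theta> \<delta> by auto
  define g where "g \<tau> = the (\<Psi> \<tau> wp)" for \<tau>
  have gS: "\<Psi> \<tau> wp = Some (g \<tau>) \<and> dist v (g \<tau>) < \<epsilon>1" if tin: "\<tau> \<in> {0..\<theta>}" for \<tau>
  proof -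
    have "\<tau> + dist wp v < \<delta>" using tin \<theta> LP(5) by auto
    then obtain x' where "\<Psi> \<tau> wp = Some x'" "dist v x' < \<epsilon>1" using step tin by auto
    then show ?thesis unfolding g_def by simp
  qed
  have gc: "continuous_on {0..\<theta>} g"
    unfolding continuous_on_iff
  proof (intro ballI allI impI)
    fix \<tau>0 and ee :: real assume \<tau>0: "\<tau>0 \<in> {0..\<theta>}" and ee: "ee > 0"
    have s0: "\<Phi> \<tau>0 wp q = Some (g \<tau>0)" using gS[OF \<tau>0] unfolding \<Psi>_def by simp
    obtain d where d: "d > 0" "\<forall>t'\<ge>0. \<forall>u'. \<forall>p'\<in>Z. \<bar>\<tau>0 - t'\<bar> + dist wp u' + dist q p' < d \<longrightarrow>
           (\<exists>x'. \<Phi> t' u' p' = Some x' \<and> dist (g \<tau>0) x' < ee)"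
      using family_cont[OF fam q _ s0 ee] \<tau>0 by auto
    show "\<exists>d>0. \<forall>\<tau>\<in>{0..\<theta>}. dist \<tau> \<tau>0 < d \<longrightarrow> dist (g \<tau>) (g \<tau>0) < ee"
    proof (intro exI[of _ d] conjI ballI impI)
      fix \<tau> assume \<tau>: "\<tau> \<in> {0..\<theta>}" and dt: "dist \<tau> \<tau>0 < d"
      have "\<bar>\<tau>0 - \<tau>\<bar> + dist wp wp + dist q q < d" using dt by (simp add: dist_real_def abs_minus_commute)
      then obtain x' where "\<Phi> \<tau> wp q = Some x'" "dist (g \<tau>0) x' < ee"
        using d(2)[rule_format, of \<tau> q wp] \<tau> q by auto
      then show "dist (g \<tau>) (g \<tau>0) < ee" using gS[OF \<tau>] unfolding \<Psi>_def by (simp add: dist_commute)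
    qed (rule d(1))
  qed
  define K1 where "K1 = g ` {0..\<theta>}"
  have cK1: "compact K1" unfolding K1_def by (rule compact_continuous_image[OF gc compact_Icc])
  define s where "s = \<theta>/2"
  have s: "s > 0" unfolding s_def using \<theta> by simp
  define D where "D = {x::nat\<Rightarrow>real. (\<forall>i\<ge>m. x i = 0) \<and> L2_set x {..<m} \<le> r}"
  have cD: "compact D" unfolding D_def by (rule disc_compact(1)) (use r in simp)
  have Dr: "\<forall>i<m. \<bar>x i\<bar> \<le> r" if "x \<in> D" for x
  proof (intro allI impI)
    fix i assume "i < m"
    then have "\<bar>x i\<bar> \<le> L2_set x {..<m}" by (intro abs_le_L2) auto
    then show "\<bar>x i\<bar> \<le> r" using that unfolding D_def by simp
  qed
  define P where "P x = (1/s) *\<^sub>R \<beta>' x" for x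
  have cP: "continuous_on D P" unfolding P_def \<beta>'_def
    by (intro cont_scale[OF FR] cont_sum[OF FR] cont_coord continuous_on_const) simp
  define K2 where "K2 = P ` D"
  have cK2: "compact K2" unfolding K2_def by (rule compact_continuous_image[OF cP cD])
  have K2X: "K2 \<subseteq> Xs N"
  proof
    fix p assume "p \<in> K2"
    then obtain x where p: "p = P x" unfolding K2_def by auto
    have "\<beta>' x \<in> Xs N" unfolding \<beta>'_def using eN sub[of N]
      by (intro subspace_sum subspace_scale) auto
    then show "p \<in> Xs N" unfolding p P_def using sub[of N] by (simp add: subspace_scale)
  qed
  have sP: "s *\<^sub>R P x = \<beta>' x" for x unfolding P_def using s by simp
  define e0 where "e0 = min (\<epsilon>/4) \<delta>1"
  have e0: "e0 > 0" unfolding e0_def using \<epsilon> \<delta>1 by simp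
  obtain L' where L'1: "L' \<noteq> []"
      and L'2: "\<forall>((\<Phi>, Z), s', f)\<in>set L'. (\<Phi>, Z) \<in> \<FF> \<and> s' > 0 \<and> continuous_on K2 f \<and> f ` K2 \<subseteq> Z"
      and L'3: "sum_list (map (\<lambda>(_, s', _). s') L') \<le> s"
      and L'4: "\<exists>c<e0. \<forall>u\<in>K1. \<forall>p\<in>K2. \<exists>w. apply_seq (mkL L' p) u = Some w \<and> dist (u + s *\<^sub>R p) w \<le> c"
    using ray_approxF[OF s e0 cK1 cK2 K2X] by blast
  obtain c where c: "c < e0" and H: "\<forall>u\<in>K1. \<forall>p\<in>K2. \<exists>w. apply_seq (mkL L' p) u = Some w \<and> dist (u + s *\<^sub>R p) w \<le> c"
    using L'4 by blast
  define \<sigma> where "\<sigma> = sum_list (map (\<lambda>(_, s', _). s') L')"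
  have zD: "(\<lambda>i. 0) \<in> D" unfolding D_def using r by (simp add: L2_set_def)
  have L'2': "\<forall>((\<Phi>, Z), s', f)\<in>set L'. (\<Phi>, Z) \<in> \<FF> \<and> s' > 0 \<and> f ` K2 \<subseteq> Z"
    using L'2 by fastforce
  have PK2: "P x \<in> K2" if "x \<in> D" for x unfolding K2_def using that by blast
  have \<sigma>pos: "\<sigma> > 0"
  proof -
    have "valid \<FF> (mkL L' (P (\<lambda>i. 0)))"
      by (rule mkL_valid[OF L'2' PK2[OF zD]])
    then have "sum_list (map snd (mkL L' (P (\<lambda>i. 0)))) > 0"
      by (rule valid_sum_pos) (simp add: mkL_ne L'1)
    then show ?thesis unfolding \<sigma>_def mkL_sum .
  qed
  define \<tau> where "\<tau> = \<theta> - \<sigma>"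
  have \<tau>: "\<tau> > 0" "\<tau> \<in> {0..\<theta>}" unfolding \<tau>_def using L'3 \<sigma>pos s_def \<theta> \<sigma>_def by auto
  define w0 where "w0 = g \<tau>"
  have w0: "\<Psi> \<tau> wp = Some w0" "dist v w0 < \<epsilon>1" using gS[OF \<tau>(2)] unfolding w0_def by auto
  have w0K1: "w0 \<in> K1" unfolding w0_def K1_def using \<tau>(2) by simp
  define E where "E p = the (apply_seq (mkL L' p) w0)" for p
  have Ecl: "apply_seq (mkL L' p) w0 = Some (E p) \<and> dist (w0 + s *\<^sub>R p) (E p) \<le> c" if "p \<in> K2" for p
    using H w0K1 that unfolding E_def by fastforce
  have cE: "continuous_on K2 E"
    unfolding E_def
  proof (rule seq_cont[where h="\<lambda>p. w0"])
    show "\<forall>((\<Phi>, Z), s, f)\<in>set L'. is_family (\<Phi>, Z) \<and> s > 0 \<and> continuous_on K2 f \<and> f ` K2 \<subseteq> Z"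
      using L'2 FSG unfolding SG_def by fastforce
    show "\<forall>p\<in>K2. apply_seq (mkL L' p) w0 \<noteq> None" using Ecl by auto
  qed (rule continuous_on_const)
  define Gm where "Gm x = \<pi> (E (P x)) - \<pi> w0" for x
  have GmV: "Gm x \<in> span Bs" for x unfolding Gm_def using \<pi>V by (simp add: span_diff)
  have cEP: "continuous_on D (\<lambda>x. E (P x))"
    by (rule continuous_on_compose2[OF cE cP]) (use PK2 in auto)
  have c\<pi>EP: "continuous_on D (\<lambda>x. \<pi> (E (P x)))"
    by (rule continuous_on_compose2[OF cont cEP]) auto
  have cGm: "continuous_on D Gm"
    unfolding Gm_def by (rule cont_diff[OF FR c\<pi>EP continuous_on_const])
  define ys where "ys = cs.cd (\<pi> v - \<pi> w0)"
  define \<Gamma> where "\<Gamma> x = (\<lambda>i. cs.cd (Gm x) i - ys i)" for x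
  have c\<Gamma>: "continuous_on D \<Gamma>"
  proof -
    have c1: "continuous_on D (\<lambda>x. cs.cd (Gm x))"
      by (rule continuous_on_compose2[OF cs.cd_cont cGm]) (use GmV in auto)
    show ?thesis unfolding \<Gamma>_def
      by (rule continuous_on_coordinatewise_then_product,
          intro continuous_on_diff continuous_on_const continuous_on_product_then_coordinatewise[OF c1])
  qed
  have \<Gamma>supp: "\<Gamma> x i = 0" if "x \<in> D" "m \<le> i" for x i
    unfolding \<Gamma>_def ys_def using that(2) by (simp add: cs.cd_supp)
  have ysm: "L2_set ys {..<m} < r/2"
  proof -
    have "dist v w0 < \<delta>2" using w0(2) \<epsilon>1 by simp
    then have "dist (\<pi> v) (\<pi> w0) < \<gamma>2" using \<delta>2(2) by blast
    then have "dist (\<pi> v - \<pi> w0) 0 < \<gamma>2" using d0[OF FR, of "\<pi> v" "\<pi> w0"] by simp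
    moreover have "\<pi> v - \<pi> w0 \<in> span Bs" using \<pi>V by (simp add: span_diff)
    ultimately show ?thesis unfolding ys_def using \<gamma>2(2) by blast
  qed
  have close: "L2_set (\<lambda>i. \<Gamma> x i - x i) {..<m} < r" if xD: "x \<in> D" for x
  proof -
    have hx: "\<forall>i<m. \<bar>x i\<bar> \<le> r" by (rule Dr[OF xD])
    have xsupp: "\<forall>i\<ge>m. x i = 0" using xD unfolding D_def by simp
    define z1 where "z1 = \<pi> (E (P x)) - \<pi> (w0 + \<beta>' x)"
    define z2 where "z2 = \<pi> (\<Sum>i<m. x i *\<^sub>R (b i - e i))"
    have z1V: "z1 \<in> span Bs" unfolding z1_def using \<pi>V by (simp add: span_diff)
    have z2V: "z2 \<in> span Bs" unfolding z2_def using \<pi>V by simp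
    have bx: "\<pi> (cs.beta x) = cs.beta x" by (rule \<pi>id[OF cs.beta_span])
    have bd: "\<beta>' x - cs.beta x = - (\<Sum>i<m. x i *\<^sub>R (b i - e i))"
      unfolding \<beta>'_def cs.beta_def by (simp add: scaleR_diff_right sum_subtractf)
    have "\<pi> (\<beta>' x) - cs.beta x = - z2"
    proof -
      have "\<pi> (\<beta>' x) - cs.beta x = \<pi> (\<beta>' x - cs.beta x)" using bx \<pi>diff by simp
      also have "\<dots> = - z2" unfolding bd z2_def using lin by (simp add: linear_neg)
      finally show ?thesis .
    qed
    then have key: "Gm x - cs.beta x = z1 - z2"
      unfolding Gm_def z1_def by (simp add: \<pi>add algebra_simps)
    have "cs.cd (Gm x - cs.beta x) = (\<lambda>i. cs.cd (Gm x) i - x i)"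
      using cs.cd_diff[OF GmV cs.beta_span] cs.cd_beta[OF xsupp] by simp
    moreover have "cs.cd (z1 - z2) = (\<lambda>i. cs.cd z1 i - cs.cd z2 i)"
      by (rule cs.cd_diff[OF z1V z2V])
    ultimately have cdeq: "(\<lambda>i. cs.cd (Gm x) i - x i) = (\<lambda>i. cs.cd z1 i - cs.cd z2 i)"
      using key by simp
    have L1: "L2_set (cs.cd z1) {..<m} < r/4"
    proof -
      have "dist (w0 + s *\<^sub>R P x) (E (P x)) \<le> c" using Ecl[OF PK2[OF xD]] by blast
      then have "dist (E (P x)) (w0 + \<beta>' x) < \<delta>1" using c e0_def sP by (simp add: dist_commute)
      then have "dist (\<pi> (E (P x))) (\<pi> (w0 + \<beta>' x)) < \<gamma>1" using \<delta>1(2) by blast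
      then have "dist z1 0 < \<gamma>1" unfolding z1_def using d0[OF FR, of "\<pi> (E (P x))" "\<pi> (w0 + \<beta>' x)"] by simp
      then show ?thesis using \<gamma>1(2) z1V by blast
    qed
    have L2: "L2_set (cs.cd z2) {..<m} < r/4" unfolding z2_def by (rule Fb[OF hx])
    have "(\<lambda>i. \<Gamma> x i - x i) = (\<lambda>i. (cs.cd z1 i - cs.cd z2 i) - ys i)"
    proof
      fix i
      have "cs.cd (Gm x) i - x i = cs.cd z1 i - cs.cd z2 i" using cdeq by (rule fun_cong)
      then show "\<Gamma> x i - x i = (cs.cd z1 i - cs.cd z2 i) - ys i" unfolding \<Gamma>_def by simp
    qed
    then have "L2_set (\<lambda>i. \<Gamma> x i - x i) {..<m} = L2_set (\<lambda>i. (cs.cd z1 i - cs.cd z2 i) - ys i) {..<m}"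
      by simp
    also have "\<dots> \<le> L2_set (\<lambda>i. cs.cd z1 i - cs.cd z2 i) {..<m} + L2_set ys {..<m}"
      by (rule L2_diff)
    also have "\<dots> \<le> (L2_set (cs.cd z1) {..<m} + L2_set (cs.cd z2) {..<m}) + L2_set ys {..<m}"
      using L2_diff[of "cs.cd z1" "cs.cd z2" "{..<m}"] by simp
    also have "\<dots> < r" using L1 L2 ysm by simp
    finally show ?thesis .
  qed
  obtain x where xD: "x \<in> D" and \<Gamma>0: "\<Gamma> x = (\<lambda>i. 0)"
    using hit_zero[OF mpos r(1) D_def c\<Gamma> \<Gamma>supp close] by blast
  have hcd: "cs.cd (Gm x) = ys"
  proof
    fix i show "cs.cd (Gm x) i = ys i" using fun_cong[OF \<Gamma>0, of i] unfolding \<Gamma>_def by simp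
  qed
  have "Gm x = cs.beta (cs.cd (Gm x))" using cs.beta_cd[OF GmV] by simp
  also have "\<dots> = cs.beta ys" using hcd by simp
  also have "\<dots> = \<pi> v - \<pi> w0" unfolding ys_def by (rule cs.beta_cd) (simp add: span_diff \<pi>V)
  finally have "Gm x = \<pi> v - \<pi> w0" .
  then have \<pi>E: "\<pi> (E (P x)) = \<pi> v" unfolding Gm_def by simp
  define Lf where "Lf = LP @ (\<Psi>, \<tau>) # mkL L' (P x)"
  have ap2: "apply_seq ((\<Psi>, \<tau>) # mkL L' (P x)) wp = Some (E (P x))"
    using w0(1) Ecl[OF PK2[OF xD]] by simp
  have apf: "apply_seq Lf u = Some (E (P x))"
    unfolding Lf_def by (rule apply_seq_append_Some[OF LP(4) ap2])
  have vf: "valid \<FF> Lf"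
    unfolding Lf_def using LP(2) \<Psi>D \<tau>(1) mkL_valid[OF L'2' PK2[OF xD]] by simp
  have sf: "sum_list (map snd Lf) = t"
    unfolding Lf_def using LP(3) mkL_sum[of L' "P x"] unfolding \<tau>_def \<sigma>_def by simp
  have df: "dist (E (P x)) v < \<epsilon>"
  proof -
    have "dist (w0 + s *\<^sub>R P x) (E (P x)) \<le> c" using Ecl[OF PK2[OF xD]] by blast
    then have d1: "dist (E (P x)) (w0 + \<beta>' x) < \<epsilon>/4" using c e0_def sP by (simp add: dist_commute)
    have "dist (w0 + \<beta>' x) (v + 0) \<le> dist w0 v + dist (\<beta>' x) 0" by (rule dadd[OF FR])
    moreover have "dist (\<beta>' x) 0 < \<epsilon>/4" by (rule Fa[OF Dr[OF xD]])
    moreover have "dist w0 v < \<epsilon>/4" using w0(2) \<epsilon>1 by (simp add: dist_commute)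
    ultimately have d2: "dist (w0 + \<beta>' x) v < \<epsilon>/2" by simp
    have "dist (E (P x)) v \<le> dist (E (P x)) (w0 + \<beta>' x) + dist (w0 + \<beta>' x) v" by (rule dist_triangle)
    then show ?thesis using d1 d2 \<epsilon> by linarith
  qed
  show ?thesis
    by (rule exI[of _ Lf], rule exI[of _ "E (P x)"]) (use apf vf sf df \<pi>E in \<open>simp add: Lf_def\<close>)
qed

lemma part2:
  fixes \<pi> :: "'a \<Rightarrow> 'a"
  assumes lin: "linear \<pi>" and cont: "continuous_on UNIV \<pi>" and idem: "\<forall>x. \<pi> (\<pi> x) = \<pi> x"
    and fB: "\<exists>B. finite B \<and> range \<pi> = span B"
    and t: "t > 0" and \<epsilon>: "\<epsilon> > 0"
  shows "\<exists>L w. L \<noteq> [] \<and> valid \<FF> L \<and> sum_list (map snd L) = t \<and> apply_seq L u = Some w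
           \<and> \<pi> w = \<pi> v \<and> dist w v < \<epsilon>"
proof -
  obtain B where B: "finite B" "range \<pi> = span B" using fB by blast
  obtain Bs where Bs: "Bs \<subseteq> range \<pi>" "independent Bs" "range \<pi> \<subseteq> span Bs"
    using maximal_independent_subset[of "range \<pi>"] by blast
  have finBs: "finite Bs" using independent_span_bound[OF B(1) Bs(2)] Bs(1) B(2) by simp
  have subR: "subspace (range \<pi>)" unfolding B(2) by (rule subspace_span)
  have spanR: "span Bs = range \<pi>"
    using span_minimal[OF Bs(1) subR] Bs(3) by blast
  define m where "m = card Bs"
  obtain b where b: "bij_betw b {0..<m} Bs" using ex_bij_betw_nat_finite[OF finBs] m_def by blast
  have cs: "coordsys Bs m b"
    unfolding coordsys_def using FR Bs(2) finBs b by (simp add: atLeast0LessThan)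
  show ?thesis
  proof (cases "m = 0")
    case True
    then have "Bs = {}" using finBs m_def by simp
    then have \<pi>0: "\<pi> x = 0" for x using spanR by auto
    obtain L w where "L \<noteq> []" "valid \<FF> L" "sum_list (map snd L) = t" "apply_seq L u = Some w" "dist w v < \<epsilon>"
      using fillF[OF t \<epsilon>, of u v] by blast
    then show ?thesis using \<pi>0 by metis
  next
    case False
    then show ?thesis using part2_pos[OF cs _ spanR lin cont idem t \<epsilon>] by simp
  qed
qed

end

theorem corollary3p12:
  fixes \<FF> :: "'a::{real_vector, complete_space} family set"
    and Xs :: "nat \<Rightarrow> 'a set"
  assumes "frechet_space TYPE('a)"
    and "\<FF> \<subseteq> SG"
    and "\<And>n. Xs n \<subseteq> Xs (Suc n)"
    and "\<And>n. subspace (Xs n)"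
    and "\<And>n. ray (Xs n) \<in> Sat_u \<FF>"
    and "closure (\<Union>n. Xs n) = UNIV"
  shows "approx_controllable (DD \<FF>) \<and>
    (\<forall>\<pi>::'a \<Rightarrow> 'a. linear \<pi> \<and> continuous_on UNIV \<pi> \<and> (\<forall>x. \<pi> (\<pi> x) = \<pi> x) \<and>
        (\<exists>B. finite B \<and> range \<pi> = span B) \<longrightarrow>
      (\<forall>u v. \<forall>t>0. \<forall>\<epsilon>>0. \<exists>L w. L \<noteq> [] \<and>
          (\<forall>(\<Psi>, s)\<in>set L. \<Psi> \<in> DD \<FF> \<and> s > 0) \<and>
          sum_list (map snd L) = t \<and>
          apply_seq L u = Some w \<and> \<pi> w = \<pi> v \<and> dist w v < \<epsilon>))"
proof
  show "approx_controllable (DD \<FF>)"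
    unfolding approx_controllable_def
  proof (intro allI impI)
    fix u and t :: real assume t: "t > 0"
    have "v \<in> closure (attainable (DD \<FF>) u t)" for v :: 'a
        unfolding closure_approachable
      proof (intro allI impI)
        fix e :: real assume e: "e > 0"
        obtain L w where "L \<noteq> []" "valid \<FF> L" "sum_list (map snd L) = t" "apply_seq L u = Some w" "dist w v < e"
          using fill[OF assms, OF t e, of u v] by blast
        then show "\<exists>y\<in>attainable (DD \<FF>) u t. dist y v < e"
          unfolding attainable_def valid_def by blast
      qed
    then show "closure (attainable (DD \<FF>) u t) = UNIV" by blast
  qed
next
  show "\<forall>\<pi>::'a \<Rightarrow> 'a. linear \<pi> \<and> continuous_on UNIV \<pi> \<and> (\<forall>x. \<pi> (\<pi> x) = \<pi> x) \<and>
        (\<exists>B. finite B \<and> range \<pi> = span B) \<longrightarrow>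
      (\<forall>u v. \<forall>t>0. \<forall>\<epsilon>>0. \<exists>L w. L \<noteq> [] \<and>
          (\<forall>(\<Psi>, s)\<in>set L. \<Psi> \<in> DD \<FF> \<and> s > 0) \<and>
          sum_list (map snd L) = t \<and>
          apply_seq L u = Some w \<and> \<pi> w = \<pi> v \<and> dist w v < \<epsilon>)"
  proof (intro allI impI)
    fix \<pi> :: "'a \<Rightarrow> 'a" and u v and t \<epsilon> :: real
    assume h: "linear \<pi> \<and> continuous_on UNIV \<pi> \<and> (\<forall>x. \<pi> (\<pi> x) = \<pi> x) \<and> (\<exists>B. finite B \<and> range \<pi> = span B)"
      and t: "t > 0" and \<epsilon>: "\<epsilon> > 0"
    have "\<exists>L w. L \<noteq> [] \<and> valid \<FF> L \<and> sum_list (map snd L) = t \<and> apply_seq L u = Some w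
           \<and> \<pi> w = \<pi> v \<and> dist w v < \<epsilon>"
      using part2[OF assms] h t \<epsilon> by blast
    then show "\<exists>L w. L \<noteq> [] \<and> (\<forall>(\<Psi>, s)\<in>set L. \<Psi> \<in> DD \<FF> \<and> s > 0) \<and>
          sum_list (map snd L) = t \<and> apply_seq L u = Some w \<and> \<pi> w = \<pi> v \<and> dist w v < \<epsilon>"
      unfolding valid_def .
  qed
qed


end
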